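(* Assume the setting below. There exist $\varepsilon\in(0,1)$ and $C>1$ such that $\|\mathcal L_s^n\|_b\le C$ for all $s=\sigma+ib$ with $|\sigma|<\varepsilon$ and all $n\ge1$, where $\|\cdot\|_b$ is the operator norm on $C^\alpha_{\mathrm{loc}}(\Delta)$ induced by $\|\psi\|_b$.
   Context: Setting: $\alpha\in(0,1]$, $\Delta=[0,1]$, $\mathcal P$ countable Lebesgue-mod-0 partition into open intervals, $F$ full-branch and $C^{1+\alpha}$ on each element, $\mathcal H,\mathcal H_n$ inverse branches of $F,F^n$, with constants $C_0>0,\rho\in(0,1)$ such that $|h'|_\infty\le C_0\rho^n$ ($h\in\mathcal H_n$), $|\log|h'||_\alpha\le C_0$ ($h\in\mathcal H$); $r:\Delta\to(0,\infty)$ $C^1$ on elements of $\mathcal P$ with $|(r\circ h)'|_\infty\le C_0$ and $\sum_{h\in\mathcal H}e^{\varepsilon_0|r\circ h|_\infty}|h'|_\infty<\infty$ for some $\varepsilon_0>0$. $C^\alpha_{\mathrm{loc}}(\Delta)$: complex $\psi$ with $|\psi|_\infty+|\psi|_{\alpha,\mathrm{loc}}<\infty$, $|\psi|_{\alpha,\mathrm{loc}}=\sup_{h\in\mathcal H}\sup_{x\ne y}|\psi(hx)-\psi(hy)|/|x-y|^\alpha$; $\|\psi\|_b=\max\{|\psi|_\infty,|\psi|_{\alpha,\mathrm{loc}}/(1+|b|^\alpha)\}$. $P_s\psi=\sum_{h\in\mathcal H}e^{-sr\circ h}|h'|\psi\circ h$. For real $|\sigma|<\varepsilon$, $\lambda_\sigma>0$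 and $f_\sigma>0$ are the continuous families of simple leading eigenvalue and $\alpha$-Hölder eigenfunction of $P_\sigma$ ($\lambda_0=1$), with $\varepsilon$ small so that $1/2\le\lambda_\sigma\le2$, $f_0/2\le f_\sigma\le2f_0$, $|f_0|_\alpha/2\le|f_\sigma|_\alpha\le2|f_0|_\alpha$; $\mathcal L_s\psi=(\lambda_\sigma f_\sigma)^{-1}P_s(f_\sigma\psi)$ for $s=\sigma+ib$. *)

theory Defs
  imports "HOL-Analysis.Analysis"
begin

text \<open>The open unit interval; all functions on Delta = [0,1] are considered mod 0,
  i.e. on the interior (0,1).\<close>
definition DeltaI :: "real set" where
  "DeltaI = {0<..<1}"

definition is_open_interval :: "real set \<Rightarrow> bool" where
  "is_open_interval A \<longleftrightarrow> (\<exists>a b. a < b \<and> A = {a<..<b})"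

definition mod0_partition :: "real set set \<Rightarrow> bool" where
  "mod0_partition P \<longleftrightarrow> countable P
     \<and> (\<forall>A\<in>P. is_open_interval A \<and> A \<subseteq> {0..1})
     \<and> (\<forall>A\<in>P. \<forall>B\<in>P. A \<noteq> B \<longrightarrow> A \<inter> B = {})
     \<and> {0..1} - \<Union>P \<in> null_sets lebesgue"

text \<open>Inverse branches of F: h maps (0,1) bijectively onto a partition element and
  F (h x) = x; normalised to be 0 outside (0,1) so that each branch is a single function.\<close>
definition inv_branches :: "real set set \<Rightarrow> (real \<Rightarrow> real) \<Rightarrow> (real \<Rightarrow> real) set" where
  "inv_branches P F = {h. (\<exists>A\<in>P. bij_betw h DeltaI A \<and> (\<forall>x\<in>DeltaI. F (h x) = x))
                          \<and> (\<forall>x. x \<notin> DeltaI \<longrightarrow> h x = 0)}"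

fun inv_branches_n :: "real set set \<Rightarrow> (real \<Rightarrow> real) \<Rightarrow> nat \<Rightarrow> (real \<Rightarrow> real) set" where
  "inv_branches_n P F 0 = {\<lambda>x. if x \<in> DeltaI then x else 0}"
| "inv_branches_n P F (Suc n) = {h \<circ> g | h g. h \<in> inv_branches P F \<and> g \<in> inv_branches_n P F n}"

definition hoelder_on :: "real \<Rightarrow> real set \<Rightarrow> (real \<Rightarrow> 'a::real_normed_vector) \<Rightarrow> bool" where
  "hoelder_on \<alpha> S g \<longleftrightarrow> bounded (g ` S) \<and>
     (\<exists>K. \<forall>x\<in>S. \<forall>y\<in>S. norm (g x - g y) \<le> K * \<bar>x - y\<bar> powr \<alpha>)"

definition hoelder_semi :: "real \<Rightarrow> real set \<Rightarrow> (real \<Rightarrow> 'a::real_normed_vector) \<Rightarrow> real" where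
  "hoelder_semi \<alpha> S g = (SUP p \<in> {(x,y). x \<in> S \<and> y \<in> S \<and> x \<noteq> y}.
       norm (g (fst p) - g (snd p)) / \<bar>fst p - snd p\<bar> powr \<alpha>)"

definition hoelder_norm :: "real \<Rightarrow> real set \<Rightarrow> (real \<Rightarrow> 'a::real_normed_vector) \<Rightarrow> real" where
  "hoelder_norm \<alpha> S g = (SUP x\<in>S. norm (g x)) + hoelder_semi \<alpha> S g"

definition sup_norm :: "(real \<Rightarrow> complex) \<Rightarrow> real" where
  "sup_norm \<psi> = (SUP x\<in>DeltaI. norm (\<psi> x))"

definition loc_quots :: "real \<Rightarrow> (real \<Rightarrow> real) set \<Rightarrow> (real \<Rightarrow> complex) \<Rightarrow> real set" where
  "loc_quots \<alpha> H \<psi> = {norm (\<psi> (h x) - \<psi> (h y)) / \<bar>x - y\<bar> powr \<alpha> | h x y.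
       h \<in> H \<and> x \<in> DeltaI \<and> y \<in> DeltaI \<and> x \<noteq> y}"

definition loc_semi :: "real \<Rightarrow> (real \<Rightarrow> real) set \<Rightarrow> (real \<Rightarrow> complex) \<Rightarrow> real" where
  "loc_semi \<alpha> H \<psi> = Sup (loc_quots \<alpha> H \<psi>)"

definition C_loc :: "real \<Rightarrow> (real \<Rightarrow> real) set \<Rightarrow> (real \<Rightarrow> complex) set" where
  "C_loc \<alpha> H = {\<psi>. bounded (\<psi> ` DeltaI) \<and> bdd_above (loc_quots \<alpha> H \<psi>)}"

definition norm_b :: "real \<Rightarrow> (real \<Rightarrow> real) set \<Rightarrow> real \<Rightarrow> (real \<Rightarrow> complex) \<Rightarrow> real" where
  "norm_b \<alpha> H b \<psi> = max (sup_norm \<psi>) (loc_semi \<alpha> H \<psi> / (1 + \<bar>b\<bar> powr \<alpha>))"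

definition Ptr :: "real set set \<Rightarrow> (real \<Rightarrow> real) \<Rightarrow> (real \<Rightarrow> real) \<Rightarrow> complex
                   \<Rightarrow> (real \<Rightarrow> complex) \<Rightarrow> real \<Rightarrow> complex" where
  "Ptr P F r s \<psi> x = infsum (\<lambda>h. exp (- (s * complex_of_real (r (h x))))
        * complex_of_real \<bar>deriv h x\<bar> * \<psi> (h x)) (inv_branches P F)"

definition Lnorm :: "real set set \<Rightarrow> (real \<Rightarrow> real) \<Rightarrow> (real \<Rightarrow> real) \<Rightarrow> (real \<Rightarrow> real)
                    \<Rightarrow> (real \<Rightarrow> real \<Rightarrow> real) \<Rightarrow> complex \<Rightarrow> (real \<Rightarrow> complex) \<Rightarrow> real \<Rightarrow> complex" where
  "Lnorm P F r lam f s \<psi> x =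
     Ptr P F r s (\<lambda>y. complex_of_real (f (Re s) y) * \<psi> y) x
       / complex_of_real (lam (Re s) * f (Re s) x)"

end

theory Submission
  imports Defs
begin

lemma cis_diff_le: "norm (cis a - cis b) \<le> \<bar>a - b\<bar>"
proof -
  have "(norm (cis a - cis b))\<^sup>2 = (cos a - cos b)\<^sup>2 + (sin a - sin b)\<^sup>2"
    by (simp add: cmod_def cis.sel)
  also have "\<dots> = 2 - 2 * cos (a - b)"
    by (simp add: power2_eq_square cos_diff algebra_simps)
  also have "\<dots> = 4 * (sin ((a - b)/2))\<^sup>2"
    proof -
      define t where "t = (a - b) / 2"
      have "a - b = 2 * t" unfolding t_def by simp
      hence "cos (a - b) = 1 - 2 * (sin t)\<^sup>2" using cos_double_sin[of t] by simp
      thus ?thesis unfolding t_def by simp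
    qed
  also have "\<dots> \<le> (a - b)\<^sup>2"
  proof -
    have "\<bar>sin ((a - b)/2)\<bar> \<le> \<bar>(a-b)/2\<bar>" by (rule abs_sin_x_le_abs_x)
    hence "(sin ((a - b)/2))\<^sup>2 \<le> ((a-b)/2)\<^sup>2" by (metis abs_le_square_iff)
    thus ?thesis by (simp add: power_divide)
  qed
  finally have "(norm (cis a - cis b))\<^sup>2 \<le> \<bar>a - b\<bar>\<^sup>2" by simp
  thus ?thesis by (simp add: abs_le_square_iff[symmetric])
qed

lemma cis_diff_le2: "norm (cis a - cis b) \<le> 2"
  using norm_triangle_ineq4[of "cis a" "cis b"] by simp

lemma min_le_powr: fixes z :: real assumes "0 \<le> z" "0 < al" "al \<le> 1"
  shows "min 2 z \<le> 2 * z powr al"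
proof (cases "z \<le> 1")
  case True
  have "z \<le> z powr al"
  proof (cases "z = 0")
    case False
    hence "z powr 1 \<le> z powr al" using True assms by (intro powr_mono') auto
    thus ?thesis using assms False by simp
  qed simp
  moreover have "0 \<le> z powr al" by simp
  ultimately show ?thesis by linarith
next
  case False
  hence "1 \<le> z powr al" using assms by (simp add: ge_one_powr_ge_zero)
  thus ?thesis by simp
qed

lemma le_powr_small: fixes z :: real assumes "0 \<le> z" "z \<le> 1" "0 < al" "al \<le> 1"
  shows "z \<le> z powr al"
proof (cases "z = 0")
  case False
  hence "z powr 1 \<le> z powr al" using assms by (intro powr_mono') auto
  thus ?thesis using assms False by simp
qed simp

lemma mvt_bound:
  fixes g :: "real \<Rightarrow> real"
  assumes d: "\<And>z. z \<in> DeltaI \<Longrightarrow> g differentiable (at z)"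
    and b: "\<And>z. z \<in> DeltaI \<Longrightarrow> \<bar>deriv g z\<bar> \<le> B"
    and x: "x \<in> DeltaI" and y: "y \<in> DeltaI"
  shows "\<bar>g x - g y\<bar> \<le> B * \<bar>x - y\<bar>"
proof -
  have main: "\<bar>g q - g p\<bar> \<le> B * \<bar>q - p\<bar>" if "p < q" "p \<in> DeltaI" "q \<in> DeltaI" for p q
  proof -
    have "\<And>z. p \<le> z \<Longrightarrow> z \<le> q \<Longrightarrow> DERIV g z :> deriv g z"
      using that d unfolding DeltaI_def by (auto simp: DERIV_deriv_iff_real_differentiable)
    from MVT2[OF \<open>p < q\<close> this] obtain z where z: "p < z" "z < q" "g q - g p = (q - p) * deriv g z" by blast
    have "z \<in> DeltaI" using z that unfolding DeltaI_def by auto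
    hence "\<bar>deriv g z\<bar> \<le> B" by (rule b)
    thus ?thesis using z that by (simp add: abs_mult mult_right_mono mult.commute)
  qed
  consider "x < y" | "x = y" | "y < x" by linarith
  thus ?thesis
  proof cases
    case 1 thus ?thesis using main[of x y] x y by (simp add: abs_minus_commute)
  next
    case 2 thus ?thesis using b[OF x] by simp
  next
    case 3 thus ?thesis using main[of y x] x y by simp
  qed
qed

lemma exp_minus_one_le: fixes t :: real shows "\<bar>exp t - 1\<bar> \<le> \<bar>t\<bar> * exp \<bar>t\<bar>"
proof (cases "t \<ge> 0")
  case True
  have "exp (-t) \<ge> 1 - t" using exp_ge_add_one_self[of "-t"] by simp
  hence "exp (-t) * exp t \<ge> (1 - t) * exp t" by (intro mult_right_mono) auto
  hence "1 \<ge> (1 - t) * exp t" by (simp add: exp_minus field_simps)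
  moreover have "exp t \<ge> 1" using True by simp
  ultimately show ?thesis using True by (simp add: algebra_simps)
next
  case False
  have "exp t \<ge> 1 + t" using exp_ge_add_one_self[of t] by simp
  moreover have "exp t \<le> 1" using False by simp
  moreover have "exp \<bar>t\<bar> \<ge> 1" by simp
  ultimately have "\<bar>exp t - 1\<bar> \<le> \<bar>t\<bar> * 1" using False by linarith
  also have "\<dots> \<le> \<bar>t\<bar> * exp \<bar>t\<bar>" by (intro mult_left_mono) auto
  finally show ?thesis .
qed

lemma ln_diff_abs: fixes a b m :: real assumes "0 < m" "m \<le> a" "m \<le> b"
  shows "\<bar>ln a - ln b\<bar> \<le> \<bar>a - b\<bar> / m"
proof -
  have a: "0 < a" "0 < b" using assms by auto
  have 1: "ln a - ln b \<le> (a - b) / b" using ln_diff_le a by blast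
  have 2: "ln b - ln a \<le> (b - a) / a" using ln_diff_le a by blast
  have "\<bar>a - b\<bar> / b \<le> \<bar>a - b\<bar> / m" "\<bar>a - b\<bar> / a \<le> \<bar>a - b\<bar> / m"
    using assms by (auto intro!: divide_left_mono)
  moreover have "(a - b) / b \<le> \<bar>a - b\<bar> / b" "(b - a) / a \<le> \<bar>a - b\<bar> / a"
    using a by (auto intro!: divide_right_mono)
  ultimately show ?thesis using 1 2 by linarith
qed

lemma powr_pow_comm: fixes \<rho> :: real assumes "0 < \<rho>" shows "(\<rho> ^ m) powr a = (\<rho> powr a) ^ m"
  using assms by (simp add: powr_realpow[symmetric] powr_powr powr_power mult.commute)

definition id0 :: "real \<Rightarrow> real" where "id0 = (\<lambda>x. if x \<in> DeltaI then x else 0)"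

lemma open_DeltaI: "open DeltaI" unfolding DeltaI_def by simp

lemma id0_diff: "x \<in> DeltaI \<Longrightarrow> id0 differentiable (at x)"
  unfolding differentiable_def id0_def
  by (rule exI, rule has_derivative_transform_within_open[OF has_derivative_ident open_DeltaI]) auto

locale LS =
  fixes \<alpha> C0 \<rho> \<epsilon>1 :: real and P :: "real set set" and F r lam :: "real \<Rightarrow> real"
    and f :: "real \<Rightarrow> real \<Rightarrow> real"
  assumes alpha: "0 < \<alpha>" "\<alpha> \<le> 1"
    and part: "mod0_partition P"
    and full_branch: "\<forall>A\<in>P. bij_betw F A DeltaI"
    and lam0: "lam 0 = 1"
    and C0: "C0 > 0" and rho: "0 < \<rho>" "\<rho> < 1" and eps1: "\<epsilon>1 > 0"
    and Hmap: "\<forall>h\<in>inv_branches P F. \<forall>x\<in>DeltaI. h x \<in> DeltaI"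
    and h_diff: "\<forall>h\<in>inv_branches P F. \<forall>x\<in>DeltaI. h differentiable (at x) \<and> deriv h x \<noteq> 0"
    and h_contr: "\<forall>n\<ge>1. \<forall>h\<in>inv_branches_n P F n. \<forall>x\<in>DeltaI. \<bar>deriv h x\<bar> \<le> C0 * \<rho> ^ n"
    and h_dist: "\<forall>h\<in>inv_branches P F. \<forall>x\<in>DeltaI. \<forall>y\<in>DeltaI.
                   \<bar>ln \<bar>deriv h x\<bar> - ln \<bar>deriv h y\<bar>\<bar> \<le> C0 * \<bar>x - y\<bar> powr \<alpha>"
    and rh_diff: "\<forall>h\<in>inv_branches P F. \<forall>x\<in>DeltaI. r differentiable (at (h x))"
    and r_h: "\<forall>h\<in>inv_branches P F. \<forall>x\<in>DeltaI. \<bar>deriv (r \<circ> h) x\<bar> \<le> C0"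
    and eigen: "\<forall>\<sigma>. \<bar>\<sigma>\<bar> < \<epsilon>1 \<longrightarrow> lam \<sigma> > 0 \<and> (\<forall>x\<in>DeltaI. f \<sigma> x > 0)
                  \<and> hoelder_on \<alpha> DeltaI (f \<sigma>)
                  \<and> (\<forall>x\<in>DeltaI. Ptr P F r (complex_of_real \<sigma>) (\<lambda>y. complex_of_real (f \<sigma> y)) x
                                  = complex_of_real (lam \<sigma> * f \<sigma> x))"
    and bounds: "\<forall>\<sigma>. \<bar>\<sigma>\<bar> < \<epsilon>1 \<longrightarrow> 1/2 \<le> lam \<sigma> \<and> lam \<sigma> \<le> 2
                  \<and> (\<forall>x\<in>DeltaI. f 0 x / 2 \<le> f \<sigma> x \<and> f \<sigma> x \<le> 2 * f 0 x)
                  \<and> hoelder_semi \<alpha> DeltaI (f 0) / 2 \<le> hoelder_semi \<alpha> DeltaI (f \<sigma>)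
                  \<and> hoelder_semi \<alpha> DeltaI (f \<sigma>) \<le> 2 * hoelder_semi \<alpha> DeltaI (f 0)"
begin

abbreviation "H \<equiv> inv_branches P F"
abbreviation "Hn \<equiv> inv_branches_n P F"

lemma H_zero: "h \<in> H \<Longrightarrow> x \<notin> DeltaI \<Longrightarrow> h x = 0"
  unfolding inv_branches_def by auto

lemma H_in_Hn1: assumes "h \<in> H" shows "h \<in> Hn 1"
proof -
  have "h \<circ> id0 = h"
  proof
    fix x show "(h \<circ> id0) x = h x"
      using H_zero[OF assms] by (auto simp: id0_def DeltaI_def)
  qed
  moreover have "id0 \<in> Hn 0" by (simp add: id0_def)
  have e: "Hn 1 = {h \<circ> g | h g. h \<in> H \<and> g \<in> Hn 0}" by (simp only: One_nat_def inv_branches_n.simps(2))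
  have "h \<circ> id0 \<in> {h \<circ> g | h g. h \<in> H \<and> g \<in> Hn 0}" using assms \<open>id0 \<in> Hn 0\<close> by blast
  hence "h \<circ> id0 \<in> Hn 1" using e by simp
  thus ?thesis using \<open>h \<circ> id0 = h\<close> by simp
qed

lemma Hn_props: "g \<in> Hn n \<Longrightarrow> x \<in> DeltaI \<Longrightarrow> g x \<in> DeltaI \<and> g differentiable (at x)"
proof (induction n arbitrary: g x)
  case 0
  then show ?case using id0_diff by (simp add: id0_def[symmetric]) (simp add: id0_def)
next
  case (Suc n)
  then obtain h g' where g: "g = h \<circ> g'" "h \<in> H" "g' \<in> Hn n" by auto
  have 1: "g' x \<in> DeltaI" "g' differentiable (at x)" using Suc g by auto
  have "h differentiable (at (g' x))" using h_diff g 1 by auto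
  hence "g differentiable (at x)" unfolding g(1) by (rule differentiable_chain_at[OF 1(2)])
  thus ?case using Hmap g 1 by (simp add: o_def)
qed

lemma Hn_lip: assumes "n \<ge> 1" "g \<in> Hn n" "x \<in> DeltaI" "y \<in> DeltaI"
  shows "\<bar>g x - g y\<bar> \<le> C0 * \<rho> ^ n * \<bar>x - y\<bar>"
  using mvt_bound[of g "C0 * \<rho> ^ n" x y] Hn_props[OF assms(2)] h_contr assms by auto

lemma H_lip: assumes "h \<in> H" "x \<in> DeltaI" "y \<in> DeltaI"
  shows "\<bar>h x - h y\<bar> \<le> C0 * \<rho> * \<bar>x - y\<bar>"
  using Hn_lip[OF _ H_in_Hn1[OF assms(1)] assms(2,3)] by simp

lemma rh_lip: assumes "h \<in> H" "x \<in> DeltaI" "y \<in> DeltaI"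
  shows "\<bar>r (h x) - r (h y)\<bar> \<le> C0 * \<bar>x - y\<bar>"
proof -
  have "(r \<circ> h) differentiable (at z)" if "z \<in> DeltaI" for z
    using differentiable_chain_at[of h z r] h_diff rh_diff assms that by auto
  thus ?thesis using mvt_bound[of "r \<circ> h" C0 x y] r_h assms by auto
qed

end

context LS begin

definition "Hf = max 0 (2 * hoelder_semi \<alpha> DeltaI (f 0))"

lemma Hf_nonneg: "Hf \<ge> 0" unfolding Hf_def by simp

lemma f_hold: assumes s: "\<bar>\<sigma>\<bar> < \<epsilon>1" and x: "x \<in> DeltaI" and y: "y \<in> DeltaI"
  shows "\<bar>f \<sigma> x - f \<sigma> y\<bar> \<le> Hf * \<bar>x - y\<bar> powr \<alpha>"
proof (cases "x = y")
  case True thus ?thesis by simp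
next
  case False
  have "hoelder_on \<alpha> DeltaI (f \<sigma>)" using eigen s by blast
  then obtain K where K: "\<forall>x\<in>DeltaI. \<forall>y\<in>DeltaI. norm (f \<sigma> x - f \<sigma> y) \<le> K * \<bar>x - y\<bar> powr \<alpha>"
    unfolding hoelder_on_def by blast
  define S where "S = {(x,y). x \<in> DeltaI \<and> y \<in> DeltaI \<and> x \<noteq> y}"
  define q where "q = (\<lambda>p. norm (f \<sigma> (fst p) - f \<sigma> (snd p)) / \<bar>fst p - snd p\<bar> powr \<alpha>)"
  have "bdd_above (q ` S)"
  proof (rule bdd_aboveI2)
    fix p assume "p \<in> S"
    then obtain a b where p: "p = (a,b)" "a \<in> DeltaI" "b \<in> DeltaI" "a \<noteq> b" unfolding S_def by auto
    have pos: "\<bar>a - b\<bar> powr \<alpha> > 0" using p by simp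
    have "norm (f \<sigma> a - f \<sigma> b) \<le> K * \<bar>a - b\<bar> powr \<alpha>" using K p by blast
    thus "q p \<le> K" unfolding q_def p using pos by (simp add: divide_le_eq)
  qed
  moreover have "(x,y) \<in> S" using x y False unfolding S_def by simp
  ultimately have "q (x,y) \<le> hoelder_semi \<alpha> DeltaI (f \<sigma>)"
    unfolding hoelder_semi_def S_def[symmetric] q_def[symmetric] by (rule cSUP_upper2) simp
  also have "\<dots> \<le> Hf" using bounds s unfolding Hf_def by auto
  finally have "q (x,y) \<le> Hf" .
  moreover have pos: "\<bar>x - y\<bar> powr \<alpha> > 0" using False by simp
  ultimately show ?thesis unfolding q_def using pos by (simp add: divide_le_eq)
qed

definition "T \<sigma> u h = exp (- \<sigma> * r (h u)) * \<bar>deriv h u\<bar> * f \<sigma> (h u)"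

lemma T_pos: assumes "\<bar>\<sigma>\<bar> < \<epsilon>1" "h \<in> H" "u \<in> DeltaI" shows "T \<sigma> u h > 0"
  using eigen assms Hmap h_diff unfolding T_def by auto

lemma T_sum: assumes s: "\<bar>\<sigma>\<bar> < \<epsilon>1" and u: "u \<in> DeltaI"
  shows "(T \<sigma> u has_sum (lam \<sigma> * f \<sigma> u)) H"
proof -
  define g where "g = (\<lambda>h. exp (- (complex_of_real \<sigma> * complex_of_real (r (h u))))
        * complex_of_real \<bar>deriv h u\<bar> * complex_of_real (f \<sigma> (h u)))"
  have geq: "g = (\<lambda>h. complex_of_real (T \<sigma> u h))"
    unfolding g_def T_def by (auto simp: exp_of_real[symmetric])
  have inf: "infsum g H = complex_of_real (lam \<sigma> * f \<sigma> u)"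
    using eigen s u unfolding g_def Ptr_def by auto
  have "lam \<sigma> * f \<sigma> u > 0" using eigen s u by auto
  hence "infsum g H \<noteq> 0" using inf by (metis less_irrefl of_real_eq_0_iff)
  hence "g summable_on H" using infsum_not_exists by blast
  hence "(g has_sum complex_of_real (lam \<sigma> * f \<sigma> u)) H" using inf by (metis has_sum_infsum)
  thus ?thesis unfolding geq by (simp only: has_sum_of_real_iff)
qed

lemma H_nonempty: "H \<noteq> {}"
proof
  assume "H = {}"
  have "(1/2::real) \<in> DeltaI" unfolding DeltaI_def by simp
  from T_sum[OF _ this, of 0] eps1 \<open>H = {}\<close> have hs: "(T 0 (1/2) has_sum (lam 0 * f 0 (1/2))) {}" by simp
  have "lam 0 * f 0 (1/2) = 0" by (rule has_sum_unique[OF hs has_sum_0]) simp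
  moreover have "lam 0 * f 0 (1/2) > 0" using eigen eps1 \<open>(1/2::real) \<in> DeltaI\<close> by auto
  ultimately show False by linarith
qed

lemma T_single: assumes s: "\<bar>\<sigma>\<bar> < \<epsilon>1" and u: "u \<in> DeltaI" and h: "h \<in> H"
  shows "T \<sigma> u h \<le> lam \<sigma> * f \<sigma> u"
proof -
  have "((\<lambda>g. T \<sigma> u g) has_sum T \<sigma> u h) {h}" using has_sum_finite[of "{h}" "T \<sigma> u"] by simp
  from has_sum_mono_neutral[OF this T_sum[OF s u]] show ?thesis
    using T_pos[OF s _ u] h by force
qed

lemma deriv_lower: assumes h: "h \<in> H" and x: "x \<in> DeltaI" and y: "y \<in> DeltaI"
  shows "exp (- C0) * \<bar>deriv h y\<bar> \<le> \<bar>deriv h x\<bar>"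
proof -
  have d: "\<bar>deriv h x\<bar> > 0" "\<bar>deriv h y\<bar> > 0" using h_diff h x y by auto
  have "\<bar>x - y\<bar> \<le> 1" using x y unfolding DeltaI_def by auto
  hence "\<bar>x - y\<bar> powr \<alpha> \<le> 1" using alpha by (intro powr_le1) auto
  hence "C0 * \<bar>x - y\<bar> powr \<alpha> \<le> C0" using C0 by (simp add: mult_left_le)
  hence "ln \<bar>deriv h y\<bar> - C0 \<le> ln \<bar>deriv h x\<bar>" using h_dist h x y by force
  hence "exp (ln \<bar>deriv h y\<bar> - C0) \<le> \<bar>deriv h x\<bar>" using d by (metis exp_le_cancel_iff exp_ln)
  thus ?thesis using d by (simp add: exp_diff exp_minus field_simps)
qed

end

lemma unif_cont_hoelder:
  fixes g :: "real \<Rightarrow> real"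
  assumes a: "0 < a" and K: "\<forall>x\<in>S. \<forall>y\<in>S. \<bar>g x - g y\<bar> \<le> K * \<bar>x - y\<bar> powr a"
  shows "uniformly_continuous_on S g"
  unfolding uniformly_continuous_on_def
proof (intro allI impI)
  fix e :: real assume e: "0 < e"
  define K' where "K' = max K 0 + 1"
  have K': "K' > 0" "K \<le> K'" unfolding K'_def by auto
  define d where "d = (e / K') powr (1 / a)"
  have d: "d > 0" using e K' unfolding d_def by simp
  have dpow: "d powr a = e / K'" unfolding d_def using a e K' by (simp add: powr_powr)
  show "\<exists>d>0. \<forall>x\<in>S. \<forall>x'\<in>S. dist x' x < d \<longrightarrow> dist (g x') (g x) < e"
  proof (intro exI conjI ballI impI)
    show "d > 0" by (rule d)
    fix x x' assume x: "x \<in> S" and x': "x' \<in> S" and dx: "dist x' x < d"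
    have "\<bar>x' - x\<bar> powr a < d powr a" using dx a by (intro powr_less_mono2) (auto simp: dist_real_def)
    hence lt: "\<bar>x' - x\<bar> powr a < e / K'" using dpow by simp
    have "\<bar>g x' - g x\<bar> \<le> K * \<bar>x' - x\<bar> powr a" using K x x' by blast
    also have "\<dots> \<le> K' * \<bar>x' - x\<bar> powr a" using K' by (intro mult_right_mono) auto
    also have "\<dots> < K' * (e / K')" using lt K' by (intro mult_strict_left_mono) auto
    also have "\<dots> = e" using K' by simp
    finally show "dist (g x') (g x) < e" by (simp add: dist_real_def)
  qed
qed

lemma ext01:
  fixes g :: "real \<Rightarrow> real"
  assumes "uniformly_continuous_on DeltaI g"
  obtains gb where "continuous_on {0..1} gb" "\<And>x. x \<in> DeltaI \<Longrightarrow> gb x = g x"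
proof -
  obtain gb where "uniformly_continuous_on (closure DeltaI) gb" "\<And>x. x \<in> DeltaI \<Longrightarrow> g x = gb x"
    using uniformly_continuous_on_extension_on_closure[OF assms] by metis
  moreover have "closure DeltaI = {0..1}" unfolding DeltaI_def by simp
  ultimately show ?thesis using that uniformly_continuous_imp_continuous by metis
qed

context LS begin

lemma branch_interval: assumes "h \<in> H"
  shows "\<exists>a b. 0 \<le> a \<and> a < b \<and> b \<le> 1 \<and> h ` DeltaI = {a<..<b} \<and> inj_on h DeltaI \<and> {a<..<b} \<in> P"
proof -
  obtain A where A: "A \<in> P" "bij_betw h DeltaI A" using assms unfolding inv_branches_def by blast
  have "is_open_interval A" "A \<subseteq> {0..1}" using part A(1) unfolding mod0_partition_def by blast+
  then obtain a b where ab: "a < b" "A = {a<..<b}" "A \<subseteq> {0..1}"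
    unfolding is_open_interval_def by blast
  have "{a<..<b} \<subseteq> {0..1}" using ab by simp
  hence "0 \<le> a" "b \<le> 1" using ab(1) greaterThanLessThan_subseteq_atLeastAtMost_iff[of a b 0 1] by simp_all
  moreover have "h ` DeltaI = {a<..<b}" "inj_on h DeltaI" using A(2) ab(2) unfolding bij_betw_def by simp_all
  ultimately show ?thesis using ab(1,2) A(1) by blast
qed

lemma elem_branch: assumes "A \<in> P" shows "\<exists>h\<in>H. h ` DeltaI = A"
proof -
  have bij: "bij_betw F A DeltaI" using full_branch assms by blast
  define h where "h = (\<lambda>x. if x \<in> DeltaI then inv_into A F x else 0)"
  have b2: "bij_betw (inv_into A F) DeltaI A" by (rule bij_betw_inv_into[OF bij])
  have "bij_betw h DeltaI A" using b2 unfolding h_def by (rule bij_betw_cong[THEN iffD1, rotated]) simp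
  moreover have "\<forall>x\<in>DeltaI. F (h x) = x" using bij unfolding h_def bij_betw_def by (auto intro: f_inv_into_f)
  moreover have "\<forall>x. x \<notin> DeltaI \<longrightarrow> h x = 0" unfolding h_def by simp
  ultimately have "h \<in> H" using assms unfolding inv_branches_def by blast
  moreover have "h ` DeltaI = A" using \<open>bij_betw h DeltaI A\<close> by (simp add: bij_betw_def)
  ultimately show ?thesis by blast
qed

lemma no_full: assumes h: "h \<in> H" shows "h ` DeltaI \<noteq> DeltaI"
proof
  assume full: "h ` DeltaI = DeltaI"
  define g where "g = (\<lambda>n x. (h ^^ n) (id0 x))"
  have gH: "g n \<in> Hn n" for n
  proof (induction n)
    case 0 thus ?case by (simp add: g_def id0_def)
  next
    case (Suc n)
    have e: "g (Suc n) = h \<circ> g n" unfolding g_def by auto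
    have "h \<circ> g n \<in> {h \<circ> g | h g. h \<in> H \<and> g \<in> Hn n}" using Suc h by blast
    thus ?case unfolding e by (simp only: inv_branches_n.simps(2))
  qed
  have gI: "g n ` DeltaI = DeltaI" for n
  proof (induction n)
    case 0 thus ?case by (force simp: g_def id0_def)
  next
    case (Suc n)
    have "g (Suc n) = h \<circ> g n" unfolding g_def by auto
    hence "g (Suc n) ` DeltaI = h ` (g n ` DeltaI)" by (simp add: image_comp)
    thus ?case using Suc full by simp
  qed
  obtain n where n: "\<rho> ^ n < 1 / (2 * C0)" using real_arch_pow_inv[of "1/(2*C0)" \<rho>] C0 rho by auto
  have "\<rho> ^ Suc n \<le> \<rho> ^ n" using rho by (simp add: power_decreasing)
  hence "C0 * \<rho> ^ Suc n \<le> C0 * \<rho> ^ n" using C0 by (intro mult_left_mono) auto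
  moreover have "C0 * \<rho> ^ n < 1/2" using n C0 by (simp add: field_simps)
  ultimately have n': "C0 * \<rho> ^ Suc n < 1/2" by linarith
  have q: "(1/4::real) \<in> DeltaI" "(3/4::real) \<in> DeltaI" unfolding DeltaI_def by auto
  then obtain x y where xy: "x \<in> DeltaI" "y \<in> DeltaI" "g (Suc n) x = 1/4" "g (Suc n) y = 3/4"
    using gI[of "Suc n"] by (metis imageE)
  have "\<bar>g (Suc n) x - g (Suc n) y\<bar> \<le> C0 * \<rho> ^ Suc n * \<bar>x - y\<bar>"
    by (rule Hn_lip[OF _ gH xy(1,2)]) simp
  also have "\<dots> \<le> C0 * \<rho> ^ Suc n * 1" using xy C0 rho unfolding DeltaI_def
    by (intro mult_left_mono) auto
  finally show False using xy n' by simp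
qed

end

context LS begin

lemma hbar: assumes h: "h \<in> H"
  obtains hb where "continuous_on {0..1} hb" "\<And>x. x \<in> DeltaI \<Longrightarrow> hb x = h x"
proof -
  have "\<forall>x\<in>DeltaI. \<forall>y\<in>DeltaI. \<bar>h x - h y\<bar> \<le> (C0 * \<rho>) * \<bar>x - y\<bar> powr 1"
    using H_lip[OF h] by simp
  hence "uniformly_continuous_on DeltaI h" by (intro unif_cont_hoelder[of 1]) auto
  from ext01[OF this] that show ?thesis by metis
qed

lemma hbar_range: assumes h: "h \<in> H" and hb: "continuous_on {0..1} hb" "\<And>x. x \<in> DeltaI \<Longrightarrow> hb x = h x"
  and ab: "h ` DeltaI = {a<..<b}" "a < b" and x: "x \<in> {0..1}"
  shows "hb x \<in> {a..b}"
proof -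
  have cl: "closure DeltaI = {0..1}" unfolding DeltaI_def by simp
  have "hb ` DeltaI \<subseteq> {a..b}" using hb(2) ab by auto
  hence "hb ` closure DeltaI \<subseteq> {a..b}" using hb(1) cl by (intro image_closure_subset) auto
  hence "hb ` {0..1} \<subseteq> {a..b}" using cl by simp
  thus ?thesis using x by blast
qed

lemma hbar_distinct: assumes h: "h \<in> H" and hb: "continuous_on {0..1} hb" "\<And>x. x \<in> DeltaI \<Longrightarrow> hb x = h x"
  shows "hb 0 \<noteq> hb 1"
proof
  assume eq: "hb 0 = hb 1"
  obtain a b where ab: "0 \<le> a" "a < b" "b \<le> 1" "h ` DeltaI = {a<..<b}" "inj_on h DeltaI"
    using branch_interval[OF h] by blast
  have cpt: "compact {0..1::real}" "{0..1::real} \<noteq> {}" by auto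
  obtain t1 where t1: "t1 \<in> {0..1}" "\<forall>y\<in>{0..1}. hb y \<le> hb t1"
    using continuous_attains_sup[OF cpt hb(1)] by blast
  obtain t0 where t0: "t0 \<in> {0..1}" "\<forall>y\<in>{0..1}. hb t0 \<le> hb y"
    using continuous_attains_inf[OF cpt hb(1)] by blast
  have "t1 \<notin> DeltaI"
  proof
    assume t: "t1 \<in> DeltaI"
    hence "h t1 \<in> {a<..<b}" using ab by blast
    hence "(h t1 + b) / 2 \<in> h ` DeltaI" using ab by auto
    then obtain x where x: "x \<in> DeltaI" "h x = (h t1 + b)/2" by auto
    have "hb x \<le> hb t1" using t1 x unfolding DeltaI_def by auto
    thus False using x t hb(2) \<open>h t1 \<in> {a<..<b}\<close> by auto
  qed
  hence max: "hb t1 = hb 0" using t1 eq unfolding DeltaI_def by (cases "t1 = 0") auto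
  have "t0 \<notin> DeltaI"
  proof
    assume t: "t0 \<in> DeltaI"
    hence "h t0 \<in> {a<..<b}" using ab by blast
    hence "(h t0 + a) / 2 \<in> h ` DeltaI" using ab by auto
    then obtain x where x: "x \<in> DeltaI" "h x = (h t0 + a)/2" by auto
    have "hb t0 \<le> hb x" using t0 x unfolding DeltaI_def by auto
    thus False using x t hb(2) \<open>h t0 \<in> {a<..<b}\<close> by auto
  qed
  hence min: "hb t0 = hb 0" using t0 eq unfolding DeltaI_def by (cases "t0 = 0") auto
  have q: "(1/4::real) \<in> DeltaI" "(3/4::real) \<in> DeltaI" unfolding DeltaI_def by auto
  have "hb (1/4) = hb 0" "hb (3/4) = hb 0" using t0 t1 max min by (auto intro!: antisym)
  hence "h (1/4) = h (3/4)" using hb(2) q by simp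
  with ab(5) q have "(1/4::real) = 3/4" by (meson inj_onD)
  thus False by simp
qed

end

context LS begin

lemma f0_lower: "\<exists>m0>0. \<forall>x\<in>DeltaI. m0 \<le> f 0 x"
proof (rule ccontr)
  assume neg: "\<not> (\<exists>m0>0. \<forall>x\<in>DeltaI. m0 \<le> f 0 x)"
  have e0: "\<bar>0::real\<bar> < \<epsilon>1" using eps1 by simp
  have fpos: "\<And>x. x \<in> DeltaI \<Longrightarrow> f 0 x > 0" using eigen e0 by blast
  have "uniformly_continuous_on DeltaI (f 0)"
    using f_hold[OF e0] alpha by (intro unif_cont_hoelder[of \<alpha>]) auto
  then obtain Fb where Fb: "continuous_on {0..1} Fb" "\<And>x. x \<in> DeltaI \<Longrightarrow> Fb x = f 0 x"
    using ext01 by metis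
  have cl: "closure DeltaI = {0..1}" unfolding DeltaI_def by simp
  have Fnn: "Fb x \<ge> 0" if "x \<in> {0..1}" for x
    using continuous_ge_on_closure[of DeltaI Fb x 0] Fb fpos that cl by force
  have cpt: "compact {0..1::real}" "{0..1::real} \<noteq> {}" by auto
  obtain t0 where t0: "t0 \<in> {0..1}" "\<forall>y\<in>{0..1}. Fb t0 \<le> Fb y"
    using continuous_attains_inf[OF cpt Fb(1)] by blast
  have Ft0: "Fb t0 = 0"
  proof (rule ccontr)
    assume "Fb t0 \<noteq> 0"
    hence "Fb t0 > 0" using Fnn t0 by force
    moreover have "\<forall>x\<in>DeltaI. Fb t0 \<le> f 0 x"
    proof
      fix x assume x: "x \<in> DeltaI"
      hence "x \<in> {0..1}" unfolding DeltaI_def by auto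
      hence "Fb t0 \<le> Fb x" using t0 by blast
      thus "Fb t0 \<le> f 0 x" using Fb(2)[OF x] by simp
    qed
    ultimately show False using neg by blast
  qed
  have zero01: "t \<in> {0,1}" if "t \<in> {0..1}" "Fb t = 0" for t
  proof (rule ccontr)
    assume "t \<notin> {0,1}"
    hence "t \<in> DeltaI" using that unfolding DeltaI_def by auto
    thus False using Fb(2) fpos that by force
  qed
  have key: "Fb x \<ge> (exp (- C0) * \<bar>deriv h (1/2)\<bar>) * Fb (hb x)"
    if h: "h \<in> H" and hb: "continuous_on {0..1} hb" "\<And>x. x \<in> DeltaI \<Longrightarrow> hb x = h x"
      and x: "x \<in> {0..1}" for h hb x
  proof -
    define \<kappa> where "\<kappa> = exp (- C0) * \<bar>deriv h (1/2)\<bar>"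
    obtain a b where ab: "0 \<le> a" "a < b" "b \<le> 1" "h ` DeltaI = {a<..<b}"
      using branch_interval[OF h] by blast
    have hb01: "hb ` {0..1} \<subseteq> {0..1}" using hbar_range[OF h hb ab(4,2)] ab by force
    have cG: "continuous_on {0..1} (\<lambda>x. Fb x - \<kappa> * Fb (hb x))"
      by (intro continuous_intros Fb(1) continuous_on_compose2[OF Fb(1) hb(1) hb01])
    have "Fb y - \<kappa> * Fb (hb y) \<ge> 0" if y: "y \<in> DeltaI" for y
    proof -
      have hy: "h y \<in> DeltaI" using Hmap h y by blast
      have half: "(1/2::real) \<in> DeltaI" unfolding DeltaI_def by simp
      have "\<kappa> \<le> \<bar>deriv h y\<bar>" unfolding \<kappa>_def by (rule deriv_lower[OF h y half])
      hence "\<kappa> * f 0 (h y) \<le> \<bar>deriv h y\<bar> * f 0 (h y)" using fpos[OF hy] by (intro mult_right_mono) auto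
      also have "\<dots> = T 0 y h" unfolding T_def by simp
      also have "\<dots> \<le> lam 0 * f 0 y" by (rule T_single[OF e0 y h])
      finally show ?thesis using Fb(2) hb(2) y hy lam0 by simp
    qed
    hence "Fb x - \<kappa> * Fb (hb x) \<ge> 0"
      using continuous_ge_on_closure[of DeltaI "\<lambda>x. Fb x - \<kappa> * Fb (hb x)" x 0] cG cl x by force
    thus ?thesis unfolding \<kappa>_def by simp
  qed
  have zero_map: "Fb (hb t) = 0 \<and> hb t \<in> {0,1}"
    if h: "h \<in> H" and hb: "continuous_on {0..1} hb" "\<And>x. x \<in> DeltaI \<Longrightarrow> hb x = h x"
      and t: "t \<in> {0..1}" "Fb t = 0" for h hb t
  proof -
    obtain a b where ab: "0 \<le> a" "a < b" "b \<le> 1" "h ` DeltaI = {a<..<b}"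
      using branch_interval[OF h] by blast
    have hr: "hb t \<in> {0..1}" using hbar_range[OF h hb ab(4,2) t(1)] ab by auto
    have half: "(1/2::real) \<in> DeltaI" unfolding DeltaI_def by simp
    have kpos: "exp (- C0) * \<bar>deriv h (1/2)\<bar> > 0" using h_diff h half by auto
    have "(exp (- C0) * \<bar>deriv h (1/2)\<bar>) * Fb (hb t) \<le> 0" using key[OF h hb t(1)] t by simp
    hence "Fb (hb t) \<le> 0" using kpos by (metis mult_le_0_iff not_less)
    hence "Fb (hb t) = 0" using Fnn[OF hr] by simp
    thus ?thesis using zero01[OF hr] by simp
  qed
  have t0': "t0 \<in> {0,1}" using zero01[OF t0(1) Ft0] .
  show False
  proof (cases "Fb 0 = 0 \<and> Fb 1 = 0")
    case True
    obtain h where h: "h \<in> H" using H_nonempty by blast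
    obtain hb where hb: "continuous_on {0..1} hb" "\<And>x. x \<in> DeltaI \<Longrightarrow> hb x = h x"
      using hbar[OF h] by blast
    obtain a b where ab: "0 \<le> a" "a < b" "b \<le> 1" "h ` DeltaI = {a<..<b}"
      using branch_interval[OF h] by blast
    have z0: "hb 0 \<in> {0,1}" and z1: "hb 1 \<in> {0,1}" using zero_map[OF h hb] True by auto
    have d: "hb 0 \<noteq> hb 1" by (rule hbar_distinct[OF h hb])
    have r0: "hb 0 \<in> {a..b}" and r1: "hb 1 \<in> {a..b}" using hbar_range[OF h hb ab(4,2)] by auto
    have "a = 0 \<and> b = 1" using z0 z1 d r0 r1 ab by auto
    hence "h ` DeltaI = DeltaI" using ab unfolding DeltaI_def by simp
    thus False using no_full[OF h] by simp
  next
    case False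
    \<comment> \<open>exactly one zero endpoint e, fixed by every branch extension\<close>
    have fix_e: "t0 \<in> {a..b}" if A: "{a<..<b} \<in> P" "a < b" for a b
    proof -
      obtain h where h: "h \<in> H" "h ` DeltaI = {a<..<b}" using elem_branch[OF A(1)] by blast
      obtain hb where hb: "continuous_on {0..1} hb" "\<And>x. x \<in> DeltaI \<Longrightarrow> hb x = h x"
        using hbar[OF h(1)] by blast
      have "Fb (hb t0) = 0 \<and> hb t0 \<in> {0,1}" using zero_map[OF h(1) hb t0(1) Ft0] .
      hence hz: "Fb (hb t0) = 0" "hb t0 \<in> {0,1}" by auto
      have "hb t0 = t0"
      proof (rule ccontr)
        assume ne: "hb t0 \<noteq> t0"
        have "Fb 0 = 0 \<and> Fb 1 = 0"
        proof (cases "t0 = 0")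
          case True thus ?thesis using ne hz Ft0 by auto
        next
          case f: False
          hence "t0 = 1" using t0' by simp
          thus ?thesis using ne hz Ft0 by auto
        qed
        thus False using False by simp
      qed
      moreover have "hb t0 \<in> {a..b}" using hbar_range[OF h(1) hb h(2) A(2) t0(1)] .
      ultimately show ?thesis by simp
    qed
    obtain h0 where h0: "h0 \<in> H" using H_nonempty by blast
    obtain a b where ab: "0 \<le> a" "a < b" "b \<le> 1" "h0 ` DeltaI = {a<..<b}" "{a<..<b} \<in> P"
      using branch_interval[OF h0] by blast
    have disj: "\<forall>A\<in>P. \<forall>B\<in>P. A \<noteq> B \<longrightarrow> A \<inter> B = {}"
      using part unfolding mod0_partition_def by blast
    have allsame: "A = {a<..<b}" if A: "A \<in> P" for A
    proof -
      have "is_open_interval A" "A \<subseteq> {0..1}" using part A unfolding mod0_partition_def by blast+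
      then obtain c d where cd: "c < d" "A = {c<..<d}" "A \<subseteq> {0..1}"
        unfolding is_open_interval_def by blast
      have "{c<..<d} \<subseteq> {0..1}" using cd by simp
      hence c0: "0 \<le> c" "d \<le> 1" using cd(1) greaterThanLessThan_subseteq_atLeastAtMost_iff[of c d 0 1] by simp_all
      have e1: "c \<le> t0" "t0 \<le> d" using fix_e[of c d] cd A by simp_all
      have e2: "a \<le> t0" "t0 \<le> b" using fix_e[of a b] ab by simp_all
      obtain p where p: "p \<in> A" "p \<in> {a<..<b}"
      proof (cases "t0 = 0")
        case True
        hence "c = 0" "a = 0" using e1 e2 c0 ab(1) by linarith+
        hence "min b d / 2 \<in> A" "min b d / 2 \<in> {a<..<b}" using cd(1,2) ab(2) by (simp_all add: min_def)
        thus ?thesis using that by blast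
      next
        case False
        hence "t0 = 1" using t0' by simp
        hence "d = 1" "b = 1" using e1 e2 c0 ab(3) by linarith+
        hence "(max a c + 1) / 2 \<in> A" "(max a c + 1) / 2 \<in> {a<..<b}" using cd(1,2) ab(2) by (simp_all add: max_def)
        thus ?thesis using that by blast
      qed
      show ?thesis
      proof (rule ccontr)
        assume "A \<noteq> {a<..<b}"
        hence "A \<inter> {a<..<b} = {}" using disj A ab(5) by blast
        thus False using p by blast
      qed
    qed
    have UP: "\<Union>P = {a<..<b}" using allsame ab(5) by blast
    have "{0..1} - \<Union>P \<in> null_sets lebesgue" using part unfolding mod0_partition_def by blast
    hence negl: "negligible ({0..1} - {a<..<b})" unfolding UP by (simp only: negligible_iff_null_sets)
    have "a = 0 \<and> b = 1"
    proof (rule ccontr)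
      assume "\<not> (a = 0 \<and> b = 1)"
      hence "0 < a \<or> b < 1" using ab by auto
      then obtain c d where cd: "c < d" "{c<..<d} \<subseteq> {0..1} - {a<..<b}"
      proof
        assume "0 < a"
        moreover have "{0<..<a} \<subseteq> {0..1} - {a<..<b}" using ab by auto
        ultimately show ?thesis using that[of 0 a] by blast
      next
        assume "b < 1"
        moreover have "{b<..<1} \<subseteq> {0..1} - {a<..<b}" using ab by auto
        ultimately show ?thesis using that[of b 1] by blast
      qed
      hence "negligible {c<..<d}" using negligible_subset[OF negl] by blast
      hence "negligible (box c d)" by simp
      thus False using negligible_interval(2)[of c d] cd by simp
    qed
    hence "h0 ` DeltaI = DeltaI" using ab unfolding DeltaI_def by simp
    thus False using no_full[OF h0] by simp
  qed
qed

end

lemma has_sum_diff':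
  fixes f g :: "'a \<Rightarrow> complex"
  assumes "(f has_sum a) A" "(g has_sum b) A"
  shows "((\<lambda>x. f x - g x) has_sum (a - b)) A"
  using has_sum_add[OF assms(1) has_sum_uminusI[OF assms(2)]] by simp

context LS begin

definition "m0 = (SOME m. m > 0 \<and> (\<forall>x\<in>DeltaI. m \<le> f 0 x))"

lemma m0: "m0 > 0" "\<And>x. x \<in> DeltaI \<Longrightarrow> m0 \<le> f 0 x"
  using someI_ex[OF f0_lower] unfolding m0_def[symmetric] by auto

lemma f_lower: assumes "\<bar>\<sigma>\<bar> < \<epsilon>1" "x \<in> DeltaI" shows "m0 / 2 \<le> f \<sigma> x"
  using m0(2)[OF assms(2)] bounds assms by force

definition "K4 = 2 * C0 + (2 / m0) * Hf * ((C0 * \<rho>) powr \<alpha> + 1)"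

lemma K4_nonneg: "K4 \<ge> 0"
  unfolding K4_def using C0 m0 Hf_nonneg by (intro add_nonneg_nonneg mult_nonneg_nonneg) auto

definition "wr \<sigma> u h = T \<sigma> u h / (lam \<sigma> * f \<sigma> u)"

lemma wr_pos: assumes "\<bar>\<sigma>\<bar> < \<epsilon>1" "h \<in> H" "u \<in> DeltaI" shows "wr \<sigma> u h > 0"
  unfolding wr_def using T_pos[OF assms] eigen assms by auto

lemma wr_sum: assumes "\<bar>\<sigma>\<bar> < \<epsilon>1" "u \<in> DeltaI" shows "(wr \<sigma> u has_sum 1) H"
proof -
  have hs: "(wr \<sigma> u has_sum ((lam \<sigma> * f \<sigma> u) / (lam \<sigma> * f \<sigma> u))) H"
    unfolding wr_def by (rule has_sum_divide_const[OF T_sum[OF assms]])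
  have "lam \<sigma> * f \<sigma> u > 0" using eigen assms by auto
  hence "(lam \<sigma> * f \<sigma> u) / (lam \<sigma> * f \<sigma> u) = 1" by (intro divide_self) linarith
  thus ?thesis using hs by metis
qed

lemma ln_wr: assumes s: "\<bar>\<sigma>\<bar> < \<epsilon>1" and h: "h \<in> H" and u: "u \<in> DeltaI"
  shows "ln (wr \<sigma> u h) = - \<sigma> * r (h u) + ln \<bar>deriv h u\<bar> + ln (f \<sigma> (h u)) - ln (lam \<sigma>) - ln (f \<sigma> u)"
proof -
  have hu: "h u \<in> DeltaI" using Hmap h u by blast
  have p: "\<bar>deriv h u\<bar> > 0" "f \<sigma> (h u) > 0" "lam \<sigma> > 0" "f \<sigma> u > 0"
    using h_diff h u eigen s hu by auto
  show ?thesis unfolding wr_def T_def using p by (simp add: ln_mult ln_div)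
qed

lemma wr_log_diff: assumes s: "\<bar>\<sigma>\<bar> < \<epsilon>1" "\<bar>\<sigma>\<bar> \<le> 1" and h: "h \<in> H" and u: "u \<in> DeltaI" and v: "v \<in> DeltaI"
  shows "\<bar>ln (wr \<sigma> v h) - ln (wr \<sigma> u h)\<bar> \<le> K4 * \<bar>u - v\<bar> powr \<alpha>"
proof -
  have hu: "h u \<in> DeltaI" and hv: "h v \<in> DeltaI" using Hmap h u v by blast+
  define d where "d = \<bar>u - v\<bar> powr \<alpha>"
  have d0: "d \<ge> 0" unfolding d_def by simp
  have uv1: "\<bar>u - v\<bar> \<le> 1" using u v unfolding DeltaI_def by auto
  have dle: "\<bar>u - v\<bar> \<le> d" unfolding d_def by (rule le_powr_small[OF _ uv1 alpha]) simp
  have mpos: "m0 / 2 > 0" using m0 by simp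
  have "\<bar>\<sigma> * r (h v) - \<sigma> * r (h u)\<bar> = \<bar>\<sigma>\<bar> * \<bar>r (h v) - r (h u)\<bar>" by (simp add: abs_mult[symmetric] algebra_simps)
  also have "\<dots> \<le> 1 * (C0 * \<bar>v - u\<bar>)" using s rh_lip[OF h v u] by (intro mult_mono) auto
  also have "\<dots> \<le> C0 * d" using dle C0 by (simp add: abs_minus_commute)
  finally have t1: "\<bar>\<sigma> * r (h v) - \<sigma> * r (h u)\<bar> \<le> C0 * d" .
  have t2: "\<bar>ln \<bar>deriv h v\<bar> - ln \<bar>deriv h u\<bar>\<bar> \<le> C0 * d"
    using h_dist h u v unfolding d_def by (simp add: abs_minus_commute)
  have "\<bar>ln (f \<sigma> (h v)) - ln (f \<sigma> (h u))\<bar> \<le> \<bar>f \<sigma> (h v) - f \<sigma> (h u)\<bar> / (m0 / 2)"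
    by (rule ln_diff_abs[OF mpos f_lower[OF s(1) hv] f_lower[OF s(1) hu]])
  also have "\<dots> \<le> (Hf * \<bar>h v - h u\<bar> powr \<alpha>) / (m0 / 2)"
    using f_hold[OF s(1) hv hu] mpos by (intro divide_right_mono) auto
  also have "\<dots> \<le> (Hf * ((C0 * \<rho>) powr \<alpha> * d)) / (m0 / 2)"
  proof -
    have "\<bar>h v - h u\<bar> powr \<alpha> \<le> (C0 * \<rho> * \<bar>v - u\<bar>) powr \<alpha>"
      using H_lip[OF h v u] alpha by (intro powr_mono2) auto
    also have "\<dots> = (C0 * \<rho>) powr \<alpha> * d" unfolding d_def using C0 rho
      by (simp add: powr_mult abs_minus_commute)
    finally show ?thesis using mpos Hf_nonneg by (intro divide_right_mono mult_left_mono) auto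
  qed
  finally have t3: "\<bar>ln (f \<sigma> (h v)) - ln (f \<sigma> (h u))\<bar> \<le> (2 / m0) * Hf * (C0 * \<rho>) powr \<alpha> * d"
    by (simp add: field_simps)
  have "\<bar>ln (f \<sigma> v) - ln (f \<sigma> u)\<bar> \<le> \<bar>f \<sigma> v - f \<sigma> u\<bar> / (m0 / 2)"
    by (rule ln_diff_abs[OF mpos f_lower[OF s(1) v] f_lower[OF s(1) u]])
  also have "\<dots> \<le> (Hf * d) / (m0 / 2)"
    using f_hold[OF s(1) v u] mpos unfolding d_def by (intro divide_right_mono) (auto simp: abs_minus_commute)
  finally have t4: "\<bar>ln (f \<sigma> v) - ln (f \<sigma> u)\<bar> \<le> (2 / m0) * Hf * d" by (simp add: field_simps)
  have "ln (wr \<sigma> v h) - ln (wr \<sigma> u h) = - (\<sigma> * r (h v) - \<sigma> * r (h u)) + (ln \<bar>deriv h v\<bar> - ln \<bar>deriv h u\<bar>)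
      + (ln (f \<sigma> (h v)) - ln (f \<sigma> (h u))) - (ln (f \<sigma> v) - ln (f \<sigma> u))"
    unfolding ln_wr[OF s(1) h u] ln_wr[OF s(1) h v] by simp
  hence "\<bar>ln (wr \<sigma> v h) - ln (wr \<sigma> u h)\<bar> \<le> C0 * d + C0 * d + (2 / m0) * Hf * (C0 * \<rho>) powr \<alpha> * d + (2 / m0) * Hf * d"
    using t1 t2 t3 t4 by linarith
  also have "\<dots> = K4 * d" unfolding K4_def by (simp add: algebra_simps add_divide_distrib)
  finally show ?thesis unfolding d_def .
qed

definition "Kw = exp K4 * (K4 + 2 * C0 powr \<alpha>)"

lemma Kw_nonneg: "Kw \<ge> 0" unfolding Kw_def using K4_nonneg by simp

lemma wr_diff: assumes s: "\<bar>\<sigma>\<bar> < \<epsilon>1" "\<bar>\<sigma>\<bar> \<le> 1" and h: "h \<in> H" and u: "u \<in> DeltaI" and v: "v \<in> DeltaI"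
  shows "\<bar>wr \<sigma> v h - wr \<sigma> u h\<bar> \<le> wr \<sigma> u h * (K4 * exp K4) * \<bar>u - v\<bar> powr \<alpha>"
    and "wr \<sigma> v h \<le> exp K4 * wr \<sigma> u h"
proof -
  define D where "D = ln (wr \<sigma> v h) - ln (wr \<sigma> u h)"
  have D: "\<bar>D\<bar> \<le> K4 * \<bar>u - v\<bar> powr \<alpha>" unfolding D_def by (rule wr_log_diff[OF s h u v])
  have uv1: "\<bar>u - v\<bar> \<le> 1" using u v unfolding DeltaI_def by auto
  have p1: "\<bar>u - v\<bar> powr \<alpha> \<le> 1" using uv1 alpha by (intro powr_le1) auto
  have D1: "\<bar>D\<bar> \<le> K4" using D p1 K4_nonneg by (meson mult_left_le order_trans)
  have pu: "wr \<sigma> u h > 0" and pv: "wr \<sigma> v h > 0" using wr_pos[OF s(1) h] u v by auto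
  have eq: "wr \<sigma> v h = wr \<sigma> u h * exp D"
    unfolding D_def using pu pv by (simp add: exp_diff)
  have "wr \<sigma> v h - wr \<sigma> u h = wr \<sigma> u h * (exp D - 1)" using eq by (simp add: right_diff_distrib)
  hence "\<bar>wr \<sigma> v h - wr \<sigma> u h\<bar> = wr \<sigma> u h * \<bar>exp D - 1\<bar>" using pu by (simp add: abs_mult)
  also have "\<dots> \<le> wr \<sigma> u h * (\<bar>D\<bar> * exp \<bar>D\<bar>)" using pu exp_minus_one_le[of D] by (intro mult_left_mono) auto
  also have "\<dots> \<le> wr \<sigma> u h * ((K4 * \<bar>u - v\<bar> powr \<alpha>) * exp K4)"
    using pu D D1 by (intro mult_left_mono mult_mono) auto
  finally show "\<bar>wr \<sigma> v h - wr \<sigma> u h\<bar> \<le> wr \<sigma> u h * (K4 * exp K4) * \<bar>u - v\<bar> powr \<alpha>"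
    by (simp add: algebra_simps)
  have "exp D \<le> exp K4" using D1 by simp
  thus "wr \<sigma> v h \<le> exp K4 * wr \<sigma> u h" using eq pu by (simp add: mult.commute)
qed

end

context LS begin

definition "wc s u h = exp (- (s * complex_of_real (r (h u)))) * complex_of_real \<bar>deriv h u\<bar>
   * complex_of_real (f (Re s) (h u)) / complex_of_real (lam (Re s) * f (Re s) u)"

lemma wc_eq: "wc s u h = cis (- (Im s * r (h u))) * complex_of_real (wr (Re s) u h)"
  unfolding wc_def wr_def T_def by (simp add: exp_eq_polar)

lemma wc_norm: assumes "\<bar>Re s\<bar> < \<epsilon>1" "h \<in> H" "u \<in> DeltaI"
  shows "norm (wc s u h) = wr (Re s) u h"
  unfolding wc_eq using wr_pos[OF assms] by (simp add: norm_mult)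

lemma wc_diff: assumes s: "\<bar>Re s\<bar> < \<epsilon>1" "\<bar>Re s\<bar> \<le> 1" and h: "h \<in> H" and u: "u \<in> DeltaI" and v: "v \<in> DeltaI"
  shows "norm (wc s u h - wc s v h) \<le> Kw * (1 + \<bar>Im s\<bar> powr \<alpha>) * wr (Re s) u h * \<bar>u - v\<bar> powr \<alpha>"
proof -
  define \<sigma> b where "\<sigma> = Re s" and "b = Im s"
  define cu cv where "cu = cis (- (b * r (h u)))" and "cv = cis (- (b * r (h v)))"
  define wu wv where "wu = wr \<sigma> u h" and "wv = wr \<sigma> v h"
  define d where "d = \<bar>u - v\<bar> powr \<alpha>"
  have d0: "d \<ge> 0" unfolding d_def by simp
  have wu: "wu > 0" and wv: "wv > 0" using wr_pos[OF s(1)[folded \<sigma>_def] h] u v unfolding wu_def wv_def by auto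
  have e: "wc s u h - wc s v h = cu * complex_of_real (wu - wv) + (cu - cv) * complex_of_real wv"
    unfolding wc_eq cu_def cv_def wu_def wv_def \<sigma>_def b_def by (simp add: algebra_simps)
  have "norm (wc s u h - wc s v h) \<le> norm (cu * complex_of_real (wu - wv)) + norm ((cu - cv) * complex_of_real wv)"
    unfolding e by (rule norm_triangle_ineq)
  also have "\<dots> = \<bar>wu - wv\<bar> + norm (cu - cv) * wv" using wv unfolding cu_def by (simp add: norm_mult of_real_diff[symmetric] del: of_real_diff)
  also have "\<dots> \<le> wu * (K4 * exp K4) * d + (2 * (\<bar>b\<bar> powr \<alpha> * C0 powr \<alpha>) * d) * (exp K4 * wu)"
  proof (intro add_mono mult_mono)
    show "\<bar>wu - wv\<bar> \<le> wu * (K4 * exp K4) * d"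
      using wr_diff(1)[OF s(1,2)[folded \<sigma>_def] h u v] unfolding wu_def wv_def d_def by (simp add: abs_minus_commute)
    show "wv \<le> exp K4 * wu" using wr_diff(2)[OF s(1,2)[folded \<sigma>_def] h u v] unfolding wu_def wv_def .
    have "norm (cu - cv) \<le> min 2 \<bar>b * r (h u) - b * r (h v)\<bar>"
      unfolding cu_def cv_def using cis_diff_le[of "- (b * r (h u))" "- (b * r (h v))"] cis_diff_le2
      by (simp add: abs_minus_commute)
    also have "\<dots> \<le> 2 * \<bar>b * r (h u) - b * r (h v)\<bar> powr \<alpha>" using min_le_powr alpha by simp
    also have "\<dots> \<le> 2 * (\<bar>b\<bar> * (C0 * \<bar>u - v\<bar>)) powr \<alpha>"
    proof -
      have "\<bar>b * r (h u) - b * r (h v)\<bar> = \<bar>b\<bar> * \<bar>r (h u) - r (h v)\<bar>" by (simp add: abs_mult[symmetric] algebra_simps)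
      also have "\<dots> \<le> \<bar>b\<bar> * (C0 * \<bar>u - v\<bar>)" using rh_lip[OF h u v] by (intro mult_left_mono) auto
      finally show ?thesis using alpha by (intro mult_left_mono powr_mono2) auto
    qed
    also have "\<dots> = 2 * (\<bar>b\<bar> powr \<alpha> * C0 powr \<alpha>) * d" unfolding d_def using C0 by (simp add: powr_mult)
    finally show "norm (cu - cv) \<le> 2 * (\<bar>b\<bar> powr \<alpha> * C0 powr \<alpha>) * d" .
  qed (use wu wv d0 K4_nonneg in auto)
  also have "\<dots> = exp K4 * (K4 + 2 * C0 powr \<alpha> * \<bar>b\<bar> powr \<alpha>) * wu * d" by (simp add: algebra_simps)
  also have "\<dots> \<le> Kw * (1 + \<bar>b\<bar> powr \<alpha>) * wu * d"
  proof -
    have "K4 + 2 * C0 powr \<alpha> * \<bar>b\<bar> powr \<alpha> \<le> (K4 + 2 * C0 powr \<alpha>) * (1 + \<bar>b\<bar> powr \<alpha>)"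
      using K4_nonneg by (simp add: algebra_simps)
    hence "exp K4 * (K4 + 2 * C0 powr \<alpha> * \<bar>b\<bar> powr \<alpha>) * (wu * d) \<le> exp K4 * ((K4 + 2 * C0 powr \<alpha>) * (1 + \<bar>b\<bar> powr \<alpha>)) * (wu * d)"
      using wu d0 by (intro mult_right_mono mult_left_mono) auto
    thus ?thesis unfolding Kw_def by (simp add: mult.assoc)
  qed
  finally show ?thesis unfolding wu_def d_def \<sigma>_def b_def .
qed

end

context LS begin

abbreviation "LL s \<equiv> Lnorm P F r lam f s"

lemma L_repr: assumes s: "\<bar>Re s\<bar> < \<epsilon>1" and psi: "\<forall>x\<in>DeltaI. norm (\<psi> x) \<le> M" and u: "u \<in> DeltaI"
  shows "((\<lambda>h. wc s u h * \<psi> (h u)) has_sum LL s \<psi> u) H"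
proof -
  define \<sigma> where "\<sigma> = Re s"
  have bnd: "norm (wc s u h * \<psi> (h u)) \<le> M * wr \<sigma> u h" if h: "h \<in> H" for h
  proof -
    have hu: "h u \<in> DeltaI" using Hmap h u by blast
    have "norm (wc s u h * \<psi> (h u)) = wr \<sigma> u h * norm (\<psi> (h u))"
      using wc_norm[OF s h u] unfolding \<sigma>_def by (simp add: norm_mult)
    also have "\<dots> \<le> wr \<sigma> u h * M" using psi hu wr_pos[OF s h u] unfolding \<sigma>_def by (intro mult_left_mono) auto
    finally show ?thesis by (simp add: mult.commute)
  qed
  have "(wr \<sigma> u) summable_on H" using wr_sum[OF s u] unfolding \<sigma>_def by (auto simp: summable_on_def)
  hence "(\<lambda>h. M * wr \<sigma> u h) summable_on H" by (rule summable_on_cmult_right)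
  hence "(\<lambda>h. norm (wc s u h * \<psi> (h u))) summable_on H"
    by (rule summable_on_comparison_test) (auto intro: bnd)
  hence sm: "(\<lambda>h. wc s u h * \<psi> (h u)) summable_on H"
    using summable_on_iff_abs_summable_on_complex by blast
  define S where "S = infsum (\<lambda>h. wc s u h * \<psi> (h u)) H"
  have hsS: "((\<lambda>h. wc s u h * \<psi> (h u)) has_sum S) H" using sm unfolding S_def by (rule has_sum_infsum)
  define c where "c = complex_of_real (lam \<sigma> * f \<sigma> u)"
  have "lam \<sigma> * f \<sigma> u > 0" using eigen s u unfolding \<sigma>_def by auto
  hence c0: "c \<noteq> 0" unfolding c_def by (metis less_irrefl of_real_eq_0_iff)
  have eqt: "exp (- (s * complex_of_real (r (h u)))) * complex_of_real \<bar>deriv h u\<bar>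
          * (complex_of_real (f (Re s) (h u)) * \<psi> (h u)) = wc s u h * \<psi> (h u) * c" for h
    unfolding wc_def c_def \<sigma>_def using c0[unfolded c_def \<sigma>_def] by (simp add: field_simps)
  have "((\<lambda>h. wc s u h * \<psi> (h u) * c) has_sum (S * c)) H" by (rule has_sum_cmult_left[OF hsS])
  hence "Ptr P F r s (\<lambda>y. complex_of_real (f (Re s) y) * \<psi> y) u = S * c"
    unfolding Ptr_def eqt by (rule infsumI)
  hence "LL s \<psi> u = S" unfolding Lnorm_def using c0 unfolding c_def \<sigma>_def by simp
  thus ?thesis using hsS by simp
qed

lemma L_bound: assumes s: "\<bar>Re s\<bar> < \<epsilon>1" and psi: "\<forall>x\<in>DeltaI. norm (\<psi> x) \<le> M" and u: "u \<in> DeltaI"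
  shows "norm (LL s \<psi> u) \<le> M"
proof -
  have "((\<lambda>h. M * wr (Re s) u h) has_sum (M * 1)) H" by (rule has_sum_cmult_right[OF wr_sum[OF s u]])
  moreover have "norm (wc s u h * \<psi> (h u)) \<le> M * wr (Re s) u h" if h: "h \<in> H" for h
  proof -
    have hu: "h u \<in> DeltaI" using Hmap h u by blast
    have "norm (wc s u h * \<psi> (h u)) = wr (Re s) u h * norm (\<psi> (h u))"
      using wc_norm[OF s h u] by (simp add: norm_mult)
    also have "\<dots> \<le> wr (Re s) u h * M" using psi hu wr_pos[OF s h u] by (intro mult_left_mono) auto
    finally show ?thesis by (simp add: mult.commute)
  qed
  ultimately show ?thesis using norm_infsum_le[OF L_repr[OF s psi u]] by simp
qed

lemma L_diff: assumes s: "\<bar>Re s\<bar> < \<epsilon>1" "\<bar>Re s\<bar> \<le> 1" and psi: "\<forall>x\<in>DeltaI. norm (\<psi> x) \<le> M"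
  and u: "u \<in> DeltaI" and v: "v \<in> DeltaI" and E: "\<forall>h\<in>H. norm (\<psi> (h u) - \<psi> (h v)) \<le> E"
  shows "norm (LL s \<psi> u - LL s \<psi> v) \<le> E + Kw * (1 + \<bar>Im s\<bar> powr \<alpha>) * M * \<bar>u - v\<bar> powr \<alpha>"
proof -
  define B where "B = E + Kw * (1 + \<bar>Im s\<bar> powr \<alpha>) * M * \<bar>u - v\<bar> powr \<alpha>"
  have M0: "M \<ge> 0" using psi u by (meson norm_ge_zero order_trans)
  have hs: "((\<lambda>h. wc s u h * \<psi> (h u) - wc s v h * \<psi> (h v)) has_sum (LL s \<psi> u - LL s \<psi> v)) H"
    by (rule has_sum_diff'[OF L_repr[OF s(1) psi u] L_repr[OF s(1) psi v]])
  have hB: "((\<lambda>h. B * wr (Re s) u h) has_sum (B * 1)) H" by (rule has_sum_cmult_right[OF wr_sum[OF s(1) u]])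
  have "norm (wc s u h * \<psi> (h u) - wc s v h * \<psi> (h v)) \<le> B * wr (Re s) u h" if h: "h \<in> H" for h
  proof -
    have hv: "h v \<in> DeltaI" using Hmap h v by blast
    have wpos: "wr (Re s) u h > 0" using wr_pos[OF s(1) h u] .
    have e: "wc s u h * \<psi> (h u) - wc s v h * \<psi> (h v) = wc s u h * (\<psi> (h u) - \<psi> (h v)) + (wc s u h - wc s v h) * \<psi> (h v)"
      by (simp add: algebra_simps)
    have "norm (wc s u h * \<psi> (h u) - wc s v h * \<psi> (h v)) \<le> norm (wc s u h) * norm (\<psi> (h u) - \<psi> (h v)) + norm (wc s u h - wc s v h) * norm (\<psi> (h v))"
      unfolding e by (metis norm_mult norm_triangle_ineq)
    also have "\<dots> \<le> wr (Re s) u h * E + (Kw * (1 + \<bar>Im s\<bar> powr \<alpha>) * wr (Re s) u h * \<bar>u - v\<bar> powr \<alpha>) * M"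
      using wc_norm[OF s(1) h u] E h wpos wc_diff[OF s h u v] psi hv Kw_nonneg
      by (intro add_mono mult_mono) auto
    also have "\<dots> = B * wr (Re s) u h" unfolding B_def by (simp add: algebra_simps)
    finally show ?thesis .
  qed
  from norm_infsum_le[OF hs hB this] show ?thesis unfolding B_def by simp
qed

end

context LS begin

lemma q_lt1: "\<rho> powr \<alpha> < 1"
  using powr_less_mono2[of \<alpha> \<rho> 1] rho alpha by simp

definition "HB m c \<phi> \<longleftrightarrow> (\<forall>g\<in>Hn m. \<forall>x\<in>DeltaI. \<forall>y\<in>DeltaI. norm (\<phi> (g x) - \<phi> (g y)) \<le> c * \<bar>x - y\<bar> powr \<alpha>)"

lemma HB_step: assumes s: "\<bar>Re s\<bar> < \<epsilon>1" "\<bar>Re s\<bar> \<le> 1" and m: "m \<ge> 1"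
  and psi: "\<forall>x\<in>DeltaI. norm (\<phi> x) \<le> M" and hb: "HB (Suc m) c \<phi>"
  shows "HB m (c + Kw * (1 + \<bar>Im s\<bar> powr \<alpha>) * M * C0 powr \<alpha> * (\<rho> powr \<alpha>) ^ m) (LL s \<phi>)"
  unfolding HB_def
proof (intro ballI)
  fix g x y assume g: "g \<in> Hn m" and x: "x \<in> DeltaI" and y: "y \<in> DeltaI"
  have M0: "M \<ge> 0" using psi x by (meson norm_ge_zero order_trans)
  define u v where "u = g x" and "v = g y"
  have u: "u \<in> DeltaI" and v: "v \<in> DeltaI" using Hn_props[OF g] x y unfolding u_def v_def by auto
  have E: "\<forall>h\<in>H. norm (\<phi> (h u) - \<phi> (h v)) \<le> c * \<bar>x - y\<bar> powr \<alpha>"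
  proof
    fix h assume h: "h \<in> H"
    have "h \<circ> g \<in> {h \<circ> g | h g. h \<in> H \<and> g \<in> Hn m}" using h g by blast
    hence "h \<circ> g \<in> Hn (Suc m)" by (simp only: inv_branches_n.simps(2))
    thus "norm (\<phi> (h u) - \<phi> (h v)) \<le> c * \<bar>x - y\<bar> powr \<alpha>"
      using hb x y unfolding HB_def u_def v_def by fastforce
  qed
  have "norm (LL s \<phi> u - LL s \<phi> v) \<le> c * \<bar>x - y\<bar> powr \<alpha> + Kw * (1 + \<bar>Im s\<bar> powr \<alpha>) * M * \<bar>u - v\<bar> powr \<alpha>"
    by (rule L_diff[OF s psi u v E])
  also have "\<bar>u - v\<bar> powr \<alpha> \<le> C0 powr \<alpha> * (\<rho> powr \<alpha>) ^ m * \<bar>x - y\<bar> powr \<alpha>"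
  proof -
    have "\<bar>u - v\<bar> powr \<alpha> \<le> (C0 * \<rho> ^ m * \<bar>x - y\<bar>) powr \<alpha>"
      using Hn_lip[OF m g x y] alpha unfolding u_def v_def by (intro powr_mono2) auto
    also have "\<dots> = C0 powr \<alpha> * (\<rho> powr \<alpha>) ^ m * \<bar>x - y\<bar> powr \<alpha>"
      using C0 rho by (simp add: powr_mult powr_pow_comm)
    finally show ?thesis .
  qed
  hence "Kw * (1 + \<bar>Im s\<bar> powr \<alpha>) * M * \<bar>u - v\<bar> powr \<alpha> \<le> Kw * (1 + \<bar>Im s\<bar> powr \<alpha>) * M * (C0 powr \<alpha> * (\<rho> powr \<alpha>) ^ m * \<bar>x - y\<bar> powr \<alpha>)"
    using Kw_nonneg M0 by (intro mult_left_mono) auto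
  finally show "norm (LL s \<phi> (g x) - LL s \<phi> (g y)) \<le> (c + Kw * (1 + \<bar>Im s\<bar> powr \<alpha>) * M * C0 powr \<alpha> * (\<rho> powr \<alpha>) ^ m) * \<bar>x - y\<bar> powr \<alpha>"
    unfolding u_def v_def by (simp add: algebra_simps)
qed

lemma iter_bound: assumes s: "\<bar>Re s\<bar> < \<epsilon>1" and psi: "\<forall>x\<in>DeltaI. norm (\<psi> x) \<le> M"
  shows "\<forall>x\<in>DeltaI. norm ((LL s ^^ n) \<psi> x) \<le> M"
proof (induction n)
  case 0 thus ?case using psi by simp
next
  case (Suc n) thus ?case using L_bound[OF s] by simp
qed

lemma HB_mono: "HB m c \<phi> \<Longrightarrow> c \<le> c' \<Longrightarrow> HB m c' \<phi>"
  unfolding HB_def by (meson mult_right_mono order_trans powr_ge_zero)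

lemma HB_iter: assumes s: "\<bar>Re s\<bar> < \<epsilon>1" "\<bar>Re s\<bar> \<le> 1" and psi: "\<forall>x\<in>DeltaI. norm (\<psi> x) \<le> M"
  and M0: "M \<ge> 0"
  shows "m \<ge> 1 \<Longrightarrow> HB (m + n) c \<psi> \<Longrightarrow>
     HB m (c + Kw * (1 + \<bar>Im s\<bar> powr \<alpha>) * M * C0 powr \<alpha> * ((\<rho> powr \<alpha>) ^ m / (1 - \<rho> powr \<alpha>))) ((LL s ^^ n) \<psi>)"
proof (induction n arbitrary: m c)
  case 0
  define A where "A = Kw * (1 + \<bar>Im s\<bar> powr \<alpha>) * M * C0 powr \<alpha>"
  have q: "\<rho> powr \<alpha> < 1" by (rule q_lt1)
  have "A \<ge> 0" unfolding A_def using Kw_nonneg M0 by simp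
  hence "0 \<le> A * ((\<rho> powr \<alpha>) ^ m / (1 - \<rho> powr \<alpha>))" using q by simp
  hence "c \<le> c + A * ((\<rho> powr \<alpha>) ^ m / (1 - \<rho> powr \<alpha>))" by simp
  from HB_mono[OF _ this] 0 show ?case unfolding A_def by simp
next
  case (Suc n)
  define A where "A = Kw * (1 + \<bar>Im s\<bar> powr \<alpha>) * M * C0 powr \<alpha>"
  define q where "q = \<rho> powr \<alpha>"
  have q: "q < 1" unfolding q_def by (rule q_lt1)
  have "HB (Suc m + n) c \<psi>" using Suc.prems by simp
  hence ih: "HB (Suc m) (c + A * (q ^ Suc m / (1 - q))) ((LL s ^^ n) \<psi>)"
    using Suc.IH[of "Suc m" c] unfolding A_def q_def by simp
  have "HB m (c + A * (q ^ Suc m / (1 - q)) + A * q ^ m) (LL s ((LL s ^^ n) \<psi>))"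
    using HB_step[OF s Suc.prems(1) iter_bound[OF s(1) psi] ih] unfolding A_def q_def by (simp add: mult.assoc)
  moreover have "A * (q ^ Suc m / (1 - q)) + A * q ^ m = A * (q ^ m / (1 - q))"
    using q by (simp add: field_simps)
  ultimately show ?case unfolding A_def q_def by (simp add: add.assoc)
qed

end

context LS begin

lemma quots_nonempty: "loc_quots \<alpha> H \<psi> \<noteq> {}"
proof -
  obtain h where h: "h \<in> H" using H_nonempty by blast
  have q: "(1/4::real) \<in> DeltaI" "(3/4::real) \<in> DeltaI" unfolding DeltaI_def by auto
  have "norm (\<psi> (h (1/4)) - \<psi> (h (3/4))) / \<bar>1/4 - 3/4\<bar> powr \<alpha> \<in> loc_quots \<alpha> H \<psi>"
    unfolding loc_quots_def using h q by force
  thus ?thesis by blast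
qed

lemma loc_semi_nonneg: assumes "bdd_above (loc_quots \<alpha> H \<psi>)" shows "0 \<le> loc_semi \<alpha> H \<psi>"
proof -
  obtain h where h: "h \<in> H" using H_nonempty by blast
  have q: "(1/4::real) \<in> DeltaI" "(3/4::real) \<in> DeltaI" unfolding DeltaI_def by auto
  have mem: "norm (\<psi> (h (1/4)) - \<psi> (h (3/4))) / \<bar>1/4 - 3/4\<bar> powr \<alpha> \<in> loc_quots \<alpha> H \<psi>"
    unfolding loc_quots_def using h q by force
  have "0 \<le> norm (\<psi> (h (1/4)) - \<psi> (h (3/4))) / \<bar>1/4 - 3/4::real\<bar> powr \<alpha>" by simp
  also have "\<dots> \<le> loc_semi \<alpha> H \<psi>" unfolding loc_semi_def by (rule cSup_upper[OF mem assms])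
  finally show ?thesis .
qed

lemma quot_le: assumes bdd: "bdd_above (loc_quots \<alpha> H \<psi>)" and h: "h \<in> H" and x: "x \<in> DeltaI" and y: "y \<in> DeltaI"
  shows "norm (\<psi> (h x) - \<psi> (h y)) \<le> loc_semi \<alpha> H \<psi> * \<bar>x - y\<bar> powr \<alpha>"
proof (cases "x = y")
  case True thus ?thesis by simp
next
  case False
  have mem: "norm (\<psi> (h x) - \<psi> (h y)) / \<bar>x - y\<bar> powr \<alpha> \<in> loc_quots \<alpha> H \<psi>"
    unfolding loc_quots_def using h x y False by blast
  have "norm (\<psi> (h x) - \<psi> (h y)) / \<bar>x - y\<bar> powr \<alpha> \<le> loc_semi \<alpha> H \<psi>"
    unfolding loc_semi_def by (rule cSup_upper[OF mem bdd])
  moreover have "\<bar>x - y\<bar> powr \<alpha> > 0" using False by simp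
  ultimately show ?thesis by (simp add: divide_le_eq)
qed

lemma HB_init: assumes bdd: "bdd_above (loc_quots \<alpha> H \<psi>)" and n: "n \<ge> 1"
  shows "HB (Suc n) (loc_semi \<alpha> H \<psi> * C0 powr \<alpha> * (\<rho> powr \<alpha>) ^ n) \<psi>"
  unfolding HB_def
proof (intro ballI)
  fix g x y assume g: "g \<in> Hn (Suc n)" and x: "x \<in> DeltaI" and y: "y \<in> DeltaI"
  have "g \<in> {h \<circ> g | h g. h \<in> H \<and> g \<in> Hn n}" using g by (simp only: inv_branches_n.simps(2))
  then obtain h g' where hg: "g = h \<circ> g'" "h \<in> H" "g' \<in> Hn n" by blast
  have gx: "g' x \<in> DeltaI" "g' y \<in> DeltaI" using Hn_props[OF hg(3)] x y by auto
  have c0: "loc_semi \<alpha> H \<psi> \<ge> 0" by (rule loc_semi_nonneg[OF bdd])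
  have "norm (\<psi> (g x) - \<psi> (g y)) \<le> loc_semi \<alpha> H \<psi> * \<bar>g' x - g' y\<bar> powr \<alpha>"
    unfolding hg(1) using quot_le[OF bdd hg(2) gx] by simp
  also have "\<bar>g' x - g' y\<bar> powr \<alpha> \<le> C0 powr \<alpha> * (\<rho> powr \<alpha>) ^ n * \<bar>x - y\<bar> powr \<alpha>"
  proof -
    have "\<bar>g' x - g' y\<bar> powr \<alpha> \<le> (C0 * \<rho> ^ n * \<bar>x - y\<bar>) powr \<alpha>"
      using Hn_lip[OF n hg(3) x y] alpha by (intro powr_mono2) auto
    also have "\<dots> = C0 powr \<alpha> * (\<rho> powr \<alpha>) ^ n * \<bar>x - y\<bar> powr \<alpha>"
      using C0 rho by (simp add: powr_mult powr_pow_comm)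
    finally show ?thesis .
  qed
  hence "loc_semi \<alpha> H \<psi> * \<bar>g' x - g' y\<bar> powr \<alpha> \<le> loc_semi \<alpha> H \<psi> * (C0 powr \<alpha> * (\<rho> powr \<alpha>) ^ n * \<bar>x - y\<bar> powr \<alpha>)"
    using c0 by (rule mult_left_mono)
  finally show "norm (\<psi> (g x) - \<psi> (g y)) \<le> loc_semi \<alpha> H \<psi> * C0 powr \<alpha> * (\<rho> powr \<alpha>) ^ n * \<bar>x - y\<bar> powr \<alpha>"
    by (simp add: mult.assoc)
qed

lemma bounded_norm_le: "bounded (\<psi> ` DeltaI) \<Longrightarrow> x \<in> DeltaI \<Longrightarrow> norm (\<psi> x) \<le> sup_norm \<psi>"
  unfolding sup_norm_def
  by (rule cSUP_upper) (auto simp: bounded_iff bdd_above_def)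

lemma DeltaI_ne: "DeltaI \<noteq> {}" unfolding DeltaI_def by (auto intro: exI[of _ "1/2"])

lemma main_locale:
  "\<exists>\<epsilon> C. 0 < \<epsilon> \<and> \<epsilon> < 1 \<and> \<epsilon> \<le> \<epsilon>1 \<and> C > 1 \<and>
     (\<forall>s::complex. \<bar>Re s\<bar> < \<epsilon> \<longrightarrow> (\<forall>n\<ge>1. \<forall>\<psi>\<in>C_loc \<alpha> H.
        (LL s ^^ n) \<psi> \<in> C_loc \<alpha> H
        \<and> norm_b \<alpha> H (Im s) ((LL s ^^ n) \<psi>) \<le> C * norm_b \<alpha> H (Im s) \<psi>))"
proof -
  define q where "q = \<rho> powr \<alpha>"
  have q: "0 < q" "q < 1" unfolding q_def using q_lt1 rho by auto
  define Cst where "Cst = 1 + C0 powr \<alpha> + Kw * C0 powr \<alpha> * (q / (1 - q))"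
  have KC: "Kw * C0 powr \<alpha> * (q / (1 - q)) \<ge> 0" using Kw_nonneg q by simp
  have "C0 powr \<alpha> > 0" using C0 by simp
  hence Cst: "Cst > 1" unfolding Cst_def using KC by linarith
  define \<epsilon> where "\<epsilon> = min \<epsilon>1 (1/2)"
  have "0 < \<epsilon>" "\<epsilon> < 1" "\<epsilon> \<le> \<epsilon>1" unfolding \<epsilon>_def using eps1 by auto
  moreover have "(LL s ^^ n) \<psi> \<in> C_loc \<alpha> H \<and> norm_b \<alpha> H (Im s) ((LL s ^^ n) \<psi>) \<le> Cst * norm_b \<alpha> H (Im s) \<psi>"
    if s: "\<bar>Re s\<bar> < \<epsilon>" and n: "n \<ge> 1" and psi: "\<psi> \<in> C_loc \<alpha> H" for s n \<psi>
  proof -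
    have s1: "\<bar>Re s\<bar> < \<epsilon>1" "\<bar>Re s\<bar> \<le> 1" using s unfolding \<epsilon>_def by auto
    have bd: "bounded (\<psi> ` DeltaI)" and bdd: "bdd_above (loc_quots \<alpha> H \<psi>)" using psi unfolding C_loc_def by auto
    define M where "M = sup_norm \<psi>"
    have psiM: "\<forall>x\<in>DeltaI. norm (\<psi> x) \<le> M" unfolding M_def using bounded_norm_le[OF bd] by blast
    have M0: "M \<ge> 0" using psiM DeltaI_ne by (meson all_not_in_conv norm_ge_zero order_trans)
    define c1 where "c1 = loc_semi \<alpha> H \<psi>"
    have c1: "c1 \<ge> 0" unfolding c1_def by (rule loc_semi_nonneg[OF bdd])
    define B where "B = \<bar>Im s\<bar> powr \<alpha>"
    have B: "B \<ge> 0" unfolding B_def by simp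
    define A where "A = Kw * (1 + B) * M * C0 powr \<alpha>"
    define Q where "Q = c1 * C0 powr \<alpha> * q ^ n + A * (q / (1 - q))"
    have hb0: "HB (1 + n) (c1 * C0 powr \<alpha> * q ^ n) \<psi>" using HB_init[OF bdd n] unfolding c1_def q_def by simp
    have hb1: "HB 1 Q ((LL s ^^ n) \<psi>)"
      using HB_iter[OF s1 psiM M0, of 1 n "c1 * C0 powr \<alpha> * q ^ n"] hb0 unfolding Q_def A_def B_def q_def by simp
    define \<phi> where "\<phi> = (LL s ^^ n) \<psi>"
    have phiM: "\<forall>x\<in>DeltaI. norm (\<phi> x) \<le> M" unfolding \<phi>_def by (rule iter_bound[OF s1(1) psiM])
    have quotsQ: "z \<le> Q" if z: "z \<in> loc_quots \<alpha> H \<phi>" for z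
    proof -
      obtain h x y where hxy: "z = norm (\<phi> (h x) - \<phi> (h y)) / \<bar>x - y\<bar> powr \<alpha>" "h \<in> H" "x \<in> DeltaI" "y \<in> DeltaI" "x \<noteq> y"
        using z unfolding loc_quots_def by blast
      have "norm (\<phi> (h x) - \<phi> (h y)) \<le> Q * \<bar>x - y\<bar> powr \<alpha>"
        using hb1 H_in_Hn1[OF hxy(2)] hxy(3,4) unfolding HB_def \<phi>_def by blast
      moreover have "\<bar>x - y\<bar> powr \<alpha> > 0" using hxy(5) by simp
      ultimately show ?thesis using hxy(1) by (simp add: divide_le_eq)
    qed
    have bddphi: "bdd_above (loc_quots \<alpha> H \<phi>)" using quotsQ by (auto simp: bdd_above_def)
    have bdphi: "bounded (\<phi> ` DeltaI)" using phiM by (auto simp: bounded_iff)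
    have inC: "\<phi> \<in> C_loc \<alpha> H" unfolding C_loc_def using bddphi bdphi by simp
    have locphi: "loc_semi \<alpha> H \<phi> \<le> Q" unfolding loc_semi_def
      using quotsQ quots_nonempty by (intro cSup_least) auto
    have supphi: "sup_norm \<phi> \<le> M" unfolding sup_norm_def using phiM DeltaI_ne by (intro cSUP_least) auto
    define N where "N = norm_b \<alpha> H (Im s) \<psi>"
    have N1: "M \<le> N" and N2: "c1 / (1 + B) \<le> N" unfolding N_def norm_b_def M_def c1_def B_def by auto
    have N0: "N \<ge> 0" using N1 M0 by simp
    have "loc_semi \<alpha> H \<phi> / (1 + B) \<le> Q / (1 + B)" using locphi B by (intro divide_right_mono) auto
    also have "\<dots> = C0 powr \<alpha> * q ^ n * (c1 / (1 + B)) + Kw * C0 powr \<alpha> * (q / (1 - q)) * M"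
    proof -
      have B1: "1 + B \<noteq> 0" using B by linarith
      have e1: "Q / (1 + B) = c1 * C0 powr \<alpha> * q ^ n / (1 + B) + A * (q / (1 - q)) / (1 + B)"
        unfolding Q_def by (rule add_divide_distrib)
      have "A * (q / (1 - q)) = (1 + B) * (Kw * C0 powr \<alpha> * (q / (1 - q)) * M)" unfolding A_def by (simp only: ac_simps)
      hence e2: "A * (q / (1 - q)) / (1 + B) = Kw * C0 powr \<alpha> * (q / (1 - q)) * M"
        by (simp only: nonzero_mult_div_cancel_left[OF B1])
      have e3: "c1 * C0 powr \<alpha> * q ^ n / (1 + B) = C0 powr \<alpha> * q ^ n * (c1 / (1 + B))" by simp
      show ?thesis unfolding e1 e2 e3 ..
    qed
    also have "\<dots> \<le> C0 powr \<alpha> * 1 * N + Kw * C0 powr \<alpha> * (q / (1 - q)) * N"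
    proof (rule add_mono)
      have c1B: "c1 / (1 + B) \<ge> 0" using c1 B by simp
      have "q ^ n * (c1 / (1 + B)) \<le> 1 * N"
        using q N2 c1B by (intro mult_mono) (auto simp: power_le_one)
      hence "C0 powr \<alpha> * (q ^ n * (c1 / (1 + B))) \<le> C0 powr \<alpha> * (1 * N)" by (intro mult_left_mono) auto
      thus "C0 powr \<alpha> * q ^ n * (c1 / (1 + B)) \<le> C0 powr \<alpha> * 1 * N" by (simp add: mult.assoc)
      show "Kw * C0 powr \<alpha> * (q / (1 - q)) * M \<le> Kw * C0 powr \<alpha> * (q / (1 - q)) * N"
        using N1 KC by (rule mult_left_mono)
    qed
    also have "\<dots> = (C0 powr \<alpha> + Kw * C0 powr \<alpha> * (q / (1 - q))) * N" by (simp only: distrib_right mult_1_right)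
    also have "\<dots> \<le> Cst * N" using N0 unfolding Cst_def by (intro mult_right_mono) auto
    finally have l1: "loc_semi \<alpha> H \<phi> / (1 + B) \<le> Cst * N" .
    have "1 * N \<le> Cst * N" using Cst N0 by (intro mult_right_mono) auto
    hence l2: "sup_norm \<phi> \<le> Cst * N" using supphi N1 by linarith
    have "norm_b \<alpha> H (Im s) \<phi> \<le> Cst * N" unfolding norm_b_def
      using l1 l2 unfolding B_def by (rule max.boundedI[rotated])
    thus ?thesis using inC unfolding \<phi>_def N_def by simp
  qed
  ultimately show ?thesis using Cst by blast
qed

end

theorem corollary6p6:
  fixes \<alpha> C0 \<rho> \<epsilon>0 \<epsilon>1 :: real
    and P :: "real set set" and F r lam :: "real \<Rightarrow> real" and f :: "real \<Rightarrow> real \<Rightarrow> real"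
  assumes alpha: "0 < \<alpha>" "\<alpha> \<le> 1"
    and part: "mod0_partition P"
    and full_branch: "\<forall>A\<in>P. bij_betw F A DeltaI"
    and F_C1alpha: "\<forall>A\<in>P. (\<forall>x\<in>A. F differentiable (at x))
                        \<and> (\<exists>K. \<forall>x\<in>A. \<forall>y\<in>A. \<bar>deriv F x - deriv F y\<bar> \<le> K * \<bar>x - y\<bar> powr \<alpha>)"
    and constants: "C0 > 0" "0 < \<rho>" "\<rho> < 1"
    and h_diff: "\<forall>h\<in>inv_branches P F. \<forall>x\<in>DeltaI. h differentiable (at x) \<and> deriv h x \<noteq> 0"
    and h_contr: "\<forall>n\<ge>1. \<forall>h\<in>inv_branches_n P F n. \<forall>x\<in>DeltaI. \<bar>deriv h x\<bar> \<le> C0 * \<rho> ^ n"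
    and h_dist: "\<forall>h\<in>inv_branches P F. \<forall>x\<in>DeltaI. \<forall>y\<in>DeltaI.
                   \<bar>ln \<bar>deriv h x\<bar> - ln \<bar>deriv h y\<bar>\<bar> \<le> C0 * \<bar>x - y\<bar> powr \<alpha>"
    and r_pos: "\<forall>x\<in>{0..1}. r x > 0"
    and r_C1: "\<forall>A\<in>P. (\<forall>x\<in>A. r differentiable (at x)) \<and> continuous_on A (deriv r)"
    and r_h: "\<forall>h\<in>inv_branches P F. \<forall>x\<in>DeltaI. \<bar>deriv (r \<circ> h) x\<bar> \<le> C0"
    and eps0: "\<epsilon>0 > 0"
    and r_sum: "(\<lambda>h. exp (\<epsilon>0 * (SUP x\<in>DeltaI. \<bar>r (h x)\<bar>)) * (SUP x\<in>DeltaI. \<bar>deriv h x\<bar>))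
                  summable_on inv_branches P F"
    and eps1: "\<epsilon>1 > 0"
    and eigen: "\<forall>\<sigma>. \<bar>\<sigma>\<bar> < \<epsilon>1 \<longrightarrow> lam \<sigma> > 0 \<and> (\<forall>x\<in>DeltaI. f \<sigma> x > 0)
                  \<and> hoelder_on \<alpha> DeltaI (f \<sigma>)
                  \<and> (\<forall>x\<in>DeltaI. Ptr P F r (complex_of_real \<sigma>) (\<lambda>y. complex_of_real (f \<sigma> y)) x
                                  = complex_of_real (lam \<sigma> * f \<sigma> x))"
    and simple_leading: "\<forall>\<sigma>. \<bar>\<sigma>\<bar> < \<epsilon>1 \<longrightarrow> (\<forall>(\<mu>::complex) (g::real \<Rightarrow> complex).
                  hoelder_on \<alpha> DeltaI g \<and> (\<exists>x\<in>DeltaI. g x \<noteq> 0)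
                  \<and> (\<forall>x\<in>DeltaI. Ptr P F r (complex_of_real \<sigma>) g x = \<mu> * g x)
                  \<longrightarrow> norm \<mu> \<le> lam \<sigma>
                      \<and> (\<mu> = complex_of_real (lam \<sigma>) \<longrightarrow>
                           (\<exists>c. \<forall>x\<in>DeltaI. g x = c * complex_of_real (f \<sigma> x))))"
    and lam0: "lam 0 = 1"
    and lam_cont: "continuous_on {-\<epsilon>1<..<\<epsilon>1} lam"
    and f_cont: "\<forall>\<sigma>0. \<bar>\<sigma>0\<bar> < \<epsilon>1 \<longrightarrow>
                  ((\<lambda>\<sigma>. hoelder_norm \<alpha> DeltaI (\<lambda>x. f \<sigma> x - f \<sigma>0 x)) \<longlongrightarrow> 0) (at \<sigma>0)"
    and bounds: "\<forall>\<sigma>. \<bar>\<sigma>\<bar> < \<epsilon>1 \<longrightarrow> 1/2 \<le> lam \<sigma> \<and> lam \<sigma> \<le> 2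
                  \<and> (\<forall>x\<in>DeltaI. f 0 x / 2 \<le> f \<sigma> x \<and> f \<sigma> x \<le> 2 * f 0 x)
                  \<and> hoelder_semi \<alpha> DeltaI (f 0) / 2 \<le> hoelder_semi \<alpha> DeltaI (f \<sigma>)
                  \<and> hoelder_semi \<alpha> DeltaI (f \<sigma>) \<le> 2 * hoelder_semi \<alpha> DeltaI (f 0)"
  shows "\<exists>\<epsilon> C. 0 < \<epsilon> \<and> \<epsilon> < 1 \<and> \<epsilon> \<le> \<epsilon>1 \<and> C > 1 \<and>
           (\<forall>s::complex. \<bar>Re s\<bar> < \<epsilon> \<longrightarrow> (\<forall>n\<ge>1. \<forall>\<psi>\<in>C_loc \<alpha> (inv_branches P F).
              (Lnorm P F r lam f s ^^ n) \<psi> \<in> C_loc \<alpha> (inv_branches P F)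
              \<and> norm_b \<alpha> (inv_branches P F) (Im s) ((Lnorm P F r lam f s ^^ n) \<psi>)
                   \<le> C * norm_b \<alpha> (inv_branches P F) (Im s) \<psi>))"
  proof -
  have Hmap: "\<forall>h\<in>inv_branches P F. \<forall>x\<in>DeltaI. h x \<in> DeltaI"
  proof (intro ballI)
    fix h x assume h: "h \<in> inv_branches P F" and x: "x \<in> DeltaI"
    obtain A where A: "A \<in> P" "bij_betw h DeltaI A" using h unfolding inv_branches_def by blast
    have "is_open_interval A" "A \<subseteq> {0..1}" using part A(1) unfolding mod0_partition_def by blast+
    then obtain a b where ab: "a < b" "A = {a<..<b}" "A \<subseteq> {0..1}" unfolding is_open_interval_def by blast
    have "{a<..<b} \<subseteq> {0..1}" using ab by simp
    hence "0 \<le> a" "b \<le> 1" using ab(1) greaterThanLessThan_subseteq_atLeastAtMost_iff[of a b 0 1] by simp_all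
    moreover have "h x \<in> A" using A(2) x unfolding bij_betw_def by blast
    ultimately show "h x \<in> DeltaI" using ab(2) unfolding DeltaI_def by auto
  qed
  have rh_diff: "\<forall>h\<in>inv_branches P F. \<forall>x\<in>DeltaI. r differentiable (at (h x))"
  proof (intro ballI)
    fix h x assume h: "h \<in> inv_branches P F" and x: "x \<in> DeltaI"
    obtain A where A: "A \<in> P" "bij_betw h DeltaI A" using h unfolding inv_branches_def by blast
    have "h x \<in> A" using A(2) x unfolding bij_betw_def by blast
    thus "r differentiable (at (h x))" using r_C1 A(1) by blast
  qed
  have "LS \<alpha> C0 \<rho> \<epsilon>1 P F r lam f"
    using alpha part full_branch lam0 constants eps1 Hmap h_diff h_contr h_dist rh_diff r_h eigen bounds
    unfolding LS_def by (intro conjI) assumption+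
  then interpret L: LS \<alpha> C0 \<rho> \<epsilon>1 P F r lam f .
  show ?thesis by (rule L.main_locale)
qed

end
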